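(* Consider the setting described in the context, with an arbitrary admissible triggering policy. For every $k\in\mathcal{K}$, the conditional mean $\mathbb{E}[x_k\mid\mathcal{I}^c_k]$ is the minimum mean-square-error estimator of $x_k$ given $\mathcal{I}^c_k$, and it satisfies $\mathbb{E}[x_0\mid\mathcal{I}^c_0]=m_0$ and $$\mathbb{E}[x_{k+1}\mid\mathcal{I}^c_{k+1}]=\begin{cases}A^{\zeta_k+1}x_{k-\zeta_k}+\sum_{t=0}^{\zeta_k}A^tBu_{k-t}, & \text{if }\delta_k=1,\\ A\,\mathbb{E}[x_k\mid\mathcal{I}^c_k]+Bu_k+\imath_k, & \text{otherwise,}\end{cases}$$ where $\imath_k=A\big(\mathbb{E}[x_k\mid\mathcal{I}^c_k,\delta_k=0]-\mathbb{E}[x_k\mid\mathcal{I}^c_k]\big)$ (the signaling residual).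
   Context: Let $n,m\ge 1$, $N\in\mathbb{N}$, and $\mathcal{K}=\{0,1,\dots,N\}$. A process evolves as $x_{k+1}=Ax_k+Bu_k+w_k$ with output $y_k=x_{k-\tau_k}$ for $k\in\mathcal{K}$, where $A\in\mathbb{R}^{n\times n}$, $B\in\mathbb{R}^{n\times m}$, $u_k\in\mathbb{R}^m$ is the control input chosen by a controller based on its information, $w_k\in\mathbb{R}^n$ is Gaussian white noise with zero mean and covariance $W\succ 0$, $x_0$ is Gaussian with mean $m_0$ and covariance $M_0$, and $\tau_k\in\mathbb{N}_0$ is a random processing delay with known distribution, with $\tau_0=0$; $x_0$, the $w_k$ and the $\tau_k$ are mutually independent. At each time an event trigger chooses $\delta_k\in\{0,1\}$; if $\delta_k=1$ the freshest observation available at the trigger is transmitted and received by the controller at time $k+1$, otherwise nothing is received. The age of information at the event trigger is $\zeta_0=0$ and, for $k\ge1$, $\zeta_k=\tau_k$ if $\tau_k<\zeta_{k-1}+1$ and $\zeta_k=\zeta_{k-1}+1$ otherwise. The age of information at the controller is $\eta_0=\infty$ and, for $k\ge1$, $\eta_k=\zeta_{k-1}+1$ if $\delta_{k-1}=1$ and $\eta_k=\eta_{k-1}+1$ otherwise. The information sets are $\mathcal{I}^e_k=\{x_{t-\zeta_t},x_{t-\eta_t},\delta_s,u_s : 0\le t\le k,\ 0\le s<k\}$ (event trigger) and $\mathcal{I}^c_k=\{x_{t-\eta_t},\delta_s,u_s: 0\le t\le k,\ 0\le s<k\}$ (controller), entries with infinite age being void. An admissible triggering policy is a family $\{\mathbb{P}(\delta_k\mid\mathcal{I}^e_k)\}_{k=0}^N$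 of Borel measurable transition kernels. *)

theory Defs
  imports "HOL-Probability.Probability" "HOL-Analysis.Analysis" "HOL-Library.Extended_Nat"
begin

fun mpow :: "real^'n^'n \<Rightarrow> nat \<Rightarrow> real^'n^'n" where
  "mpow A 0 = mat 1"
| "mpow A (Suc t) = A ** mpow A t"

definition psd_mat :: "real^'n^'n \<Rightarrow> bool" where
  "psd_mat C \<longleftrightarrow> transpose C = C \<and> (\<forall>v. 0 \<le> v \<bullet> (C *v v))"

definition pd_mat :: "real^'n^'n \<Rightarrow> bool" where
  "pd_mat C \<longleftrightarrow> transpose C = C \<and> (\<forall>v. v \<noteq> 0 \<longrightarrow> 0 < v \<bullet> (C *v v))"

(* X is a Gaussian random vector with mean mu and covariance C
   (every linear functional v.X is normal with mean v.mu and variance v.(C v);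
    degenerate variance 0 means a point mass) *)
definition gaussian_vec :: "'a measure \<Rightarrow> ('a \<Rightarrow> real^'n) \<Rightarrow> real^'n \<Rightarrow> real^'n^'n \<Rightarrow> bool" where
  "gaussian_vec M X mu C \<longleftrightarrow> psd_mat C \<and> X \<in> borel_measurable M \<and>
     (\<forall>v. distr M borel (\<lambda>\<omega>. v \<bullet> X \<omega>) =
        (if v \<bullet> (C *v v) = 0 then return borel (v \<bullet> mu)
         else density lborel (normal_density (v \<bullet> mu) (sqrt (v \<bullet> (C *v v))))))"

(* age of information at the event trigger: zeta_0 = 0,
   zeta_k = tau_k if tau_k < zeta_{k-1}+1, else zeta_{k-1}+1 *)
fun zeta :: "(nat \<Rightarrow> nat) \<Rightarrow> nat \<Rightarrow> nat" where
  "zeta tau 0 = 0"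
| "zeta tau (Suc k) = (if tau (Suc k) < zeta tau k + 1 then tau (Suc k) else zeta tau k + 1)"

(* age of information at the controller: eta_0 = infinity,
   eta_k = zeta_{k-1}+1 if delta_{k-1} = 1, else eta_{k-1}+1 *)
fun eta :: "(nat \<Rightarrow> nat) \<Rightarrow> (nat \<Rightarrow> bool) \<Rightarrow> nat \<Rightarrow> enat" where
  "eta tau dl 0 = \<infinity>"
| "eta tau dl (Suc k) = (if dl k then enat (zeta tau k + 1) else eta tau dl k + 1)"

definition zeta_rv :: "(nat \<Rightarrow> 'a \<Rightarrow> nat) \<Rightarrow> nat \<Rightarrow> 'a \<Rightarrow> nat" where
  "zeta_rv tau k = (\<lambda>\<omega>. zeta (\<lambda>j. tau j \<omega>) k)"

definition eta_rv :: "(nat \<Rightarrow> 'a \<Rightarrow> nat) \<Rightarrow> (nat \<Rightarrow> 'a \<Rightarrow> bool) \<Rightarrow> nat \<Rightarrow> 'a \<Rightarrow> enat" where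
  "eta_rv tau dl k = (\<lambda>\<omega>. eta (\<lambda>j. tau j \<omega>) (\<lambda>j. dl j \<omega>) k)"

(* observation x_{t - eta_t} held by the controller (void, encoded as 0, if eta_t = infinity;
   the age eta_t itself is a separate generator of the information) *)
definition obs_c :: "(nat \<Rightarrow> 'a \<Rightarrow> real^'n) \<Rightarrow> (nat \<Rightarrow> 'a \<Rightarrow> nat) \<Rightarrow> (nat \<Rightarrow> 'a \<Rightarrow> bool) \<Rightarrow> nat \<Rightarrow> 'a \<Rightarrow> real^'n" where
  "obs_c x tau dl t = (\<lambda>\<omega>. case eta_rv tau dl t \<omega> of enat e \<Rightarrow> x (t - e) \<omega> | \<infinity> \<Rightarrow> 0)"

definition obs_e :: "(nat \<Rightarrow> 'a \<Rightarrow> real^'n) \<Rightarrow> (nat \<Rightarrow> 'a \<Rightarrow> nat) \<Rightarrow> nat \<Rightarrow> 'a \<Rightarrow> real^'n" where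
  "obs_e x tau t = (\<lambda>\<omega>. x (t - zeta_rv tau t \<omega>) \<omega>)"

definition preimgs :: "'a measure \<Rightarrow> ('a \<Rightarrow> 'b) \<Rightarrow> 'b measure \<Rightarrow> 'a set set" where
  "preimgs M X N = {X -` A \<inter> space M | A. A \<in> sets N}"

definition gens_c :: "'a measure \<Rightarrow> (nat \<Rightarrow> 'a \<Rightarrow> real^'n) \<Rightarrow> (nat \<Rightarrow> 'a \<Rightarrow> nat) \<Rightarrow>
    (nat \<Rightarrow> 'a \<Rightarrow> bool) \<Rightarrow> (nat \<Rightarrow> 'a \<Rightarrow> real^'m) \<Rightarrow> nat \<Rightarrow> 'a set set" where
  "gens_c M x tau dl u k =
     (\<Union>t\<in>{..k}. preimgs M (eta_rv tau dl t) (count_space UNIV) \<union> preimgs M (obs_c x tau dl t) borel) \<union>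
     (\<Union>s\<in>{..<k}. preimgs M (dl s) (count_space UNIV) \<union> preimgs M (u s) borel)"

definition gens_e :: "'a measure \<Rightarrow> (nat \<Rightarrow> 'a \<Rightarrow> real^'n) \<Rightarrow> (nat \<Rightarrow> 'a \<Rightarrow> nat) \<Rightarrow>
    (nat \<Rightarrow> 'a \<Rightarrow> bool) \<Rightarrow> (nat \<Rightarrow> 'a \<Rightarrow> real^'m) \<Rightarrow> nat \<Rightarrow> 'a set set" where
  "gens_e M x tau dl u k = gens_c M x tau dl u k \<union>
     (\<Union>t\<in>{..k}. preimgs M (zeta_rv tau t) (count_space UNIV) \<union> preimgs M (obs_e x tau t) borel)"

definition Ic :: "'a measure \<Rightarrow> (nat \<Rightarrow> 'a \<Rightarrow> real^'n) \<Rightarrow> (nat \<Rightarrow> 'a \<Rightarrow> nat) \<Rightarrow>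
    (nat \<Rightarrow> 'a \<Rightarrow> bool) \<Rightarrow> (nat \<Rightarrow> 'a \<Rightarrow> real^'m) \<Rightarrow> nat \<Rightarrow> 'a measure" where
  "Ic M x tau dl u k = sigma (space M) (gens_c M x tau dl u k)"

definition Ic_dl :: "'a measure \<Rightarrow> (nat \<Rightarrow> 'a \<Rightarrow> real^'n) \<Rightarrow> (nat \<Rightarrow> 'a \<Rightarrow> nat) \<Rightarrow>
    (nat \<Rightarrow> 'a \<Rightarrow> bool) \<Rightarrow> (nat \<Rightarrow> 'a \<Rightarrow> real^'m) \<Rightarrow> nat \<Rightarrow> 'a measure" where
  "Ic_dl M x tau dl u k = sigma (space M) (gens_c M x tau dl u k \<union> preimgs M (dl k) (count_space UNIV))"

definition cond_exp_vec :: "'a measure \<Rightarrow> 'a measure \<Rightarrow> ('a \<Rightarrow> real^'n) \<Rightarrow> 'a \<Rightarrow> real^'n" where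
  "cond_exp_vec M F X = (\<lambda>\<omega>. \<chi> i. real_cond_exp M F (\<lambda>\<eta>. X \<eta> $ i) \<omega>)"

(* index set for the mutually independent primitive random variables *)
datatype prim = PX0 | PW nat | PTau nat | PXi nat

end

theory Submission
  imports Defs
begin

lemma vec_nth_meas[measurable (raw)]:
  "f \<in> borel_measurable F \<Longrightarrow> (\<lambda>\<omega>. (f \<omega> :: real^'n) $ i) \<in> borel_measurable F"
  by (rule borel_measurable_continuous_on[where f="\<lambda>v. v $ i"])
     (auto intro: continuous_on_component continuous_on_id)

lemma mv_meas[measurable (raw)]:
  "f \<in> borel_measurable F \<Longrightarrow> (\<lambda>\<omega>. (C::real^'n^'m) *v f \<omega>) \<in> borel_measurable F"
  by (rule borel_measurable_continuous_on[where f="\<lambda>v. C *v v"])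
     (auto intro: linear_continuous_on matrix_vector_mul_bounded_linear)

lemma vec_lambda_meas:
  assumes "\<And>i. f i \<in> borel_measurable F"
  shows "(\<lambda>\<omega>. (\<chi> i. f i \<omega>) :: real^'n) \<in> borel_measurable F"
proof -
  have "(\<lambda>\<omega>. (\<chi> i. f i \<omega>) \<bullet> b) \<in> borel_measurable F" if "b \<in> Basis" for b :: "real^'n"
  proof -
    from that obtain j where b: "b = axis j 1" by (auto simp: Basis_vec_def)
    have "(\<lambda>\<omega>. (\<chi> i. f i \<omega>) \<bullet> b) = f j"
      by (rule ext) (simp add: b cart_eq_inner_axis[symmetric])
    then show ?thesis using assms by simp
  qed
  then show ?thesis by (subst borel_measurable_euclidean_space) auto
qed

lemma preimgs_Pow: "preimgs M f N \<subseteq> Pow (space M)"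
  by (auto simp: preimgs_def)

lemma meas_of_preimgs:
  assumes "space F = space M" "preimgs M f N \<subseteq> sets F" "f \<in> space M \<rightarrow> space N"
  shows "f \<in> measurable F N"
  using assms unfolding measurable_def preimgs_def by auto

lemma preimgs_of_meas:
  assumes "f \<in> measurable F N" "space F = space M"
  shows "preimgs M f N \<subseteq> sets F"
  using assms unfolding preimgs_def by (auto dest: measurable_sets)

lemma sets_sigma': "G \<subseteq> Pow \<Omega> \<Longrightarrow> sets (sigma \<Omega> G) = sigma_sets \<Omega> G"
  by simp

lemma Int_stable_preimgs: "Int_stable (preimgs M f N)"
  unfolding Int_stable_def preimgs_def
proof (safe)
  fix A B assume "A \<in> sets N" "B \<in> sets N"
  then show "\<exists>C. f -` A \<inter> space M \<inter> (f -` B \<inter> space M) = f -` C \<inter> space M \<and> C \<in> sets N"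
    by (intro exI[where x="A \<inter> B"]) auto
qed

lemma sigma_sets_trace:
  assumes "S \<in> sigma_sets \<Omega> G" "\<And>T. T \<in> G \<Longrightarrow> T \<inter> E \<in> sets F"
    "E \<in> sets F" "space F = \<Omega>"
  shows "S \<inter> E \<in> sets F"
  using assms(1)
proof (induction rule: sigma_sets.induct)
  case (Basic a) then show ?case using assms(2) by auto
next
  case Empty then show ?case by simp
next
  case (Compl a)
  have "(\<Omega> - a) \<inter> E = E - (a \<inter> E)" using sets.sets_into_space[OF assms(3)] assms(4) by auto
  then show ?case using Compl assms(3) by auto
next
  case (Union a)
  have "(\<Union> (range a)) \<inter> E = (\<Union>i. a i \<inter> E)" by auto
  moreover have "(\<Union>i. a i \<inter> E) \<in> sets F" using Union.IH by (intro sets.countable_UN) auto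
  ultimately show ?case by simp
qed

definition agr :: "'a measure \<Rightarrow> 'a set \<Rightarrow> ('a \<Rightarrow> 'b) \<Rightarrow> 'b measure \<Rightarrow> bool" where
  "agr F E f N \<longleftrightarrow> (\<exists>f' \<in> measurable F N. \<forall>\<omega>\<in>E. f \<omega> = f' \<omega>)"

lemma agr_sets:
  assumes "agr F E f N" "E \<in> sets F" "space F = space M" "E \<subseteq> space M"
  shows "\<forall>S \<in> preimgs M f N. S \<inter> E \<in> sets F"
proof
  fix S assume "S \<in> preimgs M f N"
  then obtain A where A: "A \<in> sets N" "S = f -` A \<inter> space M" unfolding preimgs_def by blast
  from assms(1) obtain f' where f': "f' \<in> measurable F N" "\<And>\<omega>. \<omega> \<in> E \<Longrightarrow> f \<omega> = f' \<omega>"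
    unfolding agr_def by blast
  have "S \<inter> E = {\<omega> \<in> E. f \<omega> \<in> A}" using A(2) assms(4) by blast
  also have "\<dots> = {\<omega> \<in> E. f' \<omega> \<in> A}" using f'(2) by (intro Collect_cong) auto
  also have "\<dots> = (f' -` A \<inter> space F) \<inter> E" using assms(3,4) by blast
  finally have eq: "S \<inter> E = (f' -` A \<inter> space F) \<inter> E" .
  have "f' -` A \<inter> space F \<in> sets F" using f'(1) A(1) by (rule measurable_sets)
  then show "S \<inter> E \<in> sets F" unfolding eq using assms(2) by (rule sets.Int)
qed

lemma agr_of_sets:
  assumes "\<forall>S \<in> preimgs M f N. S \<inter> E \<in> sets F" "E \<in> sets F" "space F = space M"
    "f \<in> space M \<rightarrow> space N" "c \<in> space N"
  shows "agr F E f N"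
proof -
  define f' where "f' = (\<lambda>\<omega>. if \<omega> \<in> E then f \<omega> else c)"
  have Esub: "E \<subseteq> space M" using sets.sets_into_space[OF assms(2)] assms(3) by simp
  have "f' \<in> measurable F N"
    unfolding measurable_def
  proof (intro CollectI conjI ballI)
    show "f' \<in> space F \<rightarrow> space N"
    proof
      fix \<omega> assume "\<omega> \<in> space F" then show "f' \<omega> \<in> space N"
        using assms(3,4,5) unfolding f'_def by (cases "\<omega> \<in> E") auto
    qed
  next
    fix A assume A: "A \<in> sets N"
    have S: "(f -` A \<inter> space M) \<inter> E \<in> sets F"
      using assms(1) A unfolding preimgs_def by blast
    show "f' -` A \<inter> space F \<in> sets F"
    proof (cases "c \<in> A")
      case True
      have "f' -` A \<inter> space F = ((f -` A \<inter> space M) \<inter> E) \<union> (space F - E)"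
        using Esub assms(3) True unfolding f'_def by (auto split: if_splits)
      then show ?thesis using S assms(2) by simp
    next
      case False
      have "f' -` A \<inter> space F = ((f -` A \<inter> space M) \<inter> E)"
        using Esub assms(3) False unfolding f'_def by (auto split: if_splits)
      then show ?thesis using S by simp
    qed
  qed
  moreover have "\<forall>\<omega>\<in>E. f \<omega> = f' \<omega>" unfolding f'_def by simp
  ultimately show ?thesis unfolding agr_def by blast
qed

lemma agr_mono: "agr F E f N \<Longrightarrow> E' \<subseteq> E \<Longrightarrow> agr F E' f N"
  unfolding agr_def by blast

lemma agr_meas: "f \<in> measurable F N \<Longrightarrow> agr F E f N"
  unfolding agr_def by blast

lemma agr_cong: "agr F E f N \<Longrightarrow> (\<And>\<omega>. \<omega> \<in> E \<Longrightarrow> g \<omega> = f \<omega>) \<Longrightarrow> agr F E g N"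
  unfolding agr_def by metis

lemma agr_space:
  assumes "agr F (space M) f N" "space F = space M"
  shows "f \<in> measurable F N"
proof -
  from assms obtain f' where f': "f' \<in> measurable F N" "\<And>\<omega>. \<omega> \<in> space M \<Longrightarrow> f \<omega> = f' \<omega>"
    unfolding agr_def by blast
  have "f \<in> measurable F N \<longleftrightarrow> f' \<in> measurable F N"
    by (rule measurable_cong) (simp add: f'(2) assms(2))
  then show ?thesis using f'(1) by blast
qed

lemma zeta_le: "zeta tau k \<le> k"
  by (induction k) auto

lemma zeta_mono_step: "k - zeta tau k \<le> Suc k - zeta tau (Suc k)"
  using zeta_le[of tau k] by auto

lemma zeta_mono: "s \<le> k \<Longrightarrow> s - zeta tau s \<le> k - zeta tau k"
proof (induction k)
  case 0 then show ?case by simp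
next
  case (Suc k)
  then show ?case using zeta_mono_step[of k tau] by (cases "s = Suc k") auto
qed

lemma eta_enat: "eta tau dl (Suc k) = enat e \<Longrightarrow> e \<le> Suc k \<and> Suc k - e \<le> k - zeta tau k"
proof (induction k arbitrary: e)
  case 0
  then show ?case by (auto split: if_splits)
next
  case (Suc k)
  show ?case
  proof (cases "dl (Suc k)")
    case True
    then show ?thesis using Suc.prems zeta_le[of tau "Suc k"] by auto
  next
    case False
    then have h: "eta tau dl (Suc k) + 1 = enat e" using Suc.prems False by (subst (asm) eta.simps(2)) (simp del: eta.simps)
    obtain e' where e': "eta tau dl (Suc k) = enat e'" "e = e' + 1"
      using h by (cases "eta tau dl (Suc k)") (auto simp del: eta.simps simp: one_enat_def)
    from Suc.IH[OF e'(1)] have "e' \<le> Suc k" "Suc k - e' \<le> k - zeta tau k" by auto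
    then show ?thesis using e' zeta_mono_step[of k tau] by auto
  qed
qed

lemma eta_Suc_le: "eta tau dl t = enat e \<Longrightarrow> e \<le> t"
  by (cases t) (auto dest!: eta_enat simp del: eta.simps(2))

lemma mpow_comm: "mpow A t ** A = A ** mpow A t"
  by (induction t) (auto simp: matrix_mul_assoc[symmetric])

lemma unroll:
  assumes dyn: "\<And>k. x (Suc k) = A *v x k + B *v u k + w k"
  shows "z \<le> k \<Longrightarrow> x (Suc k) = mpow A (z + 1) *v x (k - z)
      + (\<Sum>t\<in>{0..z}. (mpow A t ** B) *v u (k - t))
      + (\<Sum>t\<in>{0..z}. mpow A t *v w (k - t))"
proof (induction z)
  case 0 then show ?case using dyn[of k] by (simp add: matrix_vector_mul_lid)
next
  case (Suc z)
  have kz: "k - z = Suc (k - Suc z)" using Suc.prems by simp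
  have "x (Suc k) = mpow A (z + 1) *v x (k - z)
      + (\<Sum>t\<in>{0..z}. (mpow A t ** B) *v u (k - t))
      + (\<Sum>t\<in>{0..z}. mpow A t *v w (k - t))" using Suc by simp
  also have "mpow A (z + 1) *v x (k - z) = mpow A (Suc z + 1) *v x (k - Suc z)
      + (mpow A (Suc z) ** B) *v u (k - Suc z) + mpow A (Suc z) *v w (k - Suc z)"
    unfolding kz dyn
    by (simp add: matrix_vector_right_distrib matrix_vector_mul_assoc mpow_comm[symmetric] matrix_mul_assoc)
  finally show ?case by (simp add: algebra_simps)
qed

locale setting =
  fixes M :: "'a measure"
    and A :: "real^'n^'n" and B :: "real^'m^'n"
    and W M0 :: "real^'n^'n" and m0 :: "real^'n"
    and x w :: "nat \<Rightarrow> 'a \<Rightarrow> real^'n"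
    and u :: "nat \<Rightarrow> 'a \<Rightarrow> real^'m"
    and tau :: "nat \<Rightarrow> 'a \<Rightarrow> nat"
    and dl :: "nat \<Rightarrow> 'a \<Rightarrow> bool"
    and xi :: "nat \<Rightarrow> 'a \<Rightarrow> real"
  assumes P: "prob_space M"
    and x0_gauss: "gaussian_vec M (x 0) m0 M0"
    and W_pd: "pd_mat W"
    and w_gauss: "\<And>k. gaussian_vec M (w k) 0 W"
    and tau_meas: "\<And>k. tau k \<in> measurable M (count_space UNIV)"
    and tau0: "\<And>\<omega>. \<omega> \<in> space M \<Longrightarrow> tau 0 \<omega> = 0"
    and xi_meas: "\<And>k. xi k \<in> borel_measurable M"
    and indep: "prob_space.indep_sets M
        (\<lambda>i. case i of PX0 \<Rightarrow> preimgs M (x 0) borel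
                     | PW k \<Rightarrow> preimgs M (w k) borel
                     | PTau k \<Rightarrow> preimgs M (tau k) (count_space UNIV)
                     | PXi k \<Rightarrow> preimgs M (xi k) borel) UNIV"
    and dyn: "\<And>k \<omega>. \<omega> \<in> space M \<Longrightarrow> x (Suc k) \<omega> = A *v x k \<omega> + B *v u k \<omega> + w k \<omega>"
    and ctrl: "\<And>k. u k \<in> borel_measurable (Ic M x tau dl u k)"
    and ctrl_L2: "\<And>k i. integrable M (\<lambda>\<omega>. (u k \<omega> $ i)\<^sup>2)"
    and trig: "\<And>k. dl k \<in> measurable
        (sigma (space M) (gens_e M x tau dl u k \<union> preimgs M (xi k) borel)) (count_space UNIV)"
begin

sublocale prob_space M by (rule P)

definition Gs :: "prim \<Rightarrow> 'a set set" where
  "Gs = (\<lambda>i. case i of PX0 \<Rightarrow> preimgs M (x 0) borel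
                     | PW k \<Rightarrow> preimgs M (w k) borel
                     | PTau k \<Rightarrow> preimgs M (tau k) (count_space UNIV)
                     | PXi k \<Rightarrow> preimgs M (xi k) borel)"

definition okF :: "nat \<Rightarrow> prim \<Rightarrow> bool" where
  "okF j i = (case i of PW i' \<Rightarrow> i' < j | _ \<Rightarrow> True)"

definition GF :: "nat \<Rightarrow> 'a set set" where
  "GF j = (\<Union>i\<in>{i. okF j i}. Gs i)"

definition FF :: "nat \<Rightarrow> 'a measure" where
  "FF j = sigma (space M) (GF j)"

definition Ev :: "nat \<Rightarrow> nat \<Rightarrow> 'a set" where
  "Ev k j = {\<omega> \<in> space M. k - zeta_rv tau k \<omega> \<le> j}"

lemma indep_Gs: "indep_sets Gs UNIV"
  using indep unfolding Gs_def .

lemma Gs_events: "Gs i \<subseteq> events"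
  using indep_Gs unfolding indep_sets_def by blast

lemma GF_events: "GF j \<subseteq> events"
  using Gs_events unfolding GF_def by blast

lemma GF_Pow: "GF j \<subseteq> Pow (space M)"
  using GF_events sets.sets_into_space by blast

lemma space_FF[simp]: "space (FF j) = space M"
  unfolding FF_def using GF_Pow by simp

lemma sets_FF: "sets (FF j) = sigma_sets (space M) (GF j)"
  unfolding FF_def using GF_Pow by simp

lemma FF_sub: "sets (FF j) \<subseteq> sets M"
  unfolding sets_FF using GF_events by (rule sets.sigma_sets_subset)

lemma subalg_FF: "subalgebra M (FF j)"
  unfolding subalgebra_def using FF_sub by simp

lemma FF_mono: "i \<le> j \<Longrightarrow> sets (FF i) \<subseteq> sets (FF j)"
proof -
  assume ij: "i \<le> j"
  have "{p. okF i p} \<subseteq> {p. okF j p}" using ij by (auto simp: okF_def split: prim.splits)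
  then have "GF i \<subseteq> GF j" unfolding GF_def by (rule UN_mono) auto
  then show ?thesis unfolding sets_FF by (rule sigma_sets_subseteq)
qed

lemma meas_FF_mono: "f \<in> measurable (FF i) N \<Longrightarrow> i \<le> j \<Longrightarrow> f \<in> measurable (FF j) N"
  using FF_mono[of i j] unfolding measurable_def by auto

lemma meas_FF_M: "f \<in> measurable (FF j) N \<Longrightarrow> f \<in> measurable M N"
  using FF_sub[of j] unfolding measurable_def by auto

lemma Gs_sub_FF: "okF j i \<Longrightarrow> Gs i \<subseteq> sets (FF j)"
  unfolding sets_FF GF_def by auto

lemma x0_FF: "x 0 \<in> borel_measurable (FF j)"
  by (rule meas_of_preimgs) (use Gs_sub_FF[of j PX0] in \<open>auto simp: Gs_def okF_def\<close>)

lemma w_FF: "i < j \<Longrightarrow> w i \<in> borel_measurable (FF j)"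
  by (rule meas_of_preimgs) (use Gs_sub_FF[of j "PW i"] in \<open>auto simp: Gs_def okF_def\<close>)

lemma tau_FF: "tau i \<in> measurable (FF j) (count_space UNIV)"
  by (rule meas_of_preimgs) (use Gs_sub_FF[of j "PTau i"] in \<open>auto simp: Gs_def okF_def\<close>)

lemma xi_FF: "xi i \<in> borel_measurable (FF j)"
  by (rule meas_of_preimgs) (use Gs_sub_FF[of j "PXi i"] in \<open>auto simp: Gs_def okF_def\<close>)

lemma x0_meas: "x 0 \<in> borel_measurable M"
  using x0_FF meas_FF_M by blast

lemma w_meas: "w i \<in> borel_measurable M"
  using w_FF[of i "Suc i"] meas_FF_M by blast

lemma zeta_rv_Suc: "zeta_rv tau (Suc k) = (\<lambda>\<omega>. if tau (Suc k) \<omega> < zeta_rv tau k \<omega> + 1 then tau (Suc k) \<omega> else zeta_rv tau k \<omega> + 1)"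
  unfolding zeta_rv_def by simp

lemma zeta_FF: "zeta_rv tau k \<in> measurable (FF j) (count_space UNIV)"
proof (induction k)
  case 0 then show ?case unfolding zeta_rv_def by simp
next
  case (Suc k)
  have nb: "\<And>f::'a\<Rightarrow>nat. f \<in> measurable (FF j) (count_space UNIV) \<Longrightarrow> f \<in> borel_measurable (FF j)"
    by (erule measurable_compose) simp
  note [measurable] = Suc tau_FF nb[OF Suc] nb[OF tau_FF]
  show ?case unfolding zeta_rv_Suc by measurable
qed

lemma Ev_FF: "Ev k j \<in> sets (FF j)"
proof -
  note [measurable] = zeta_FF
  have "{\<omega> \<in> space (FF j). k - zeta_rv tau k \<omega> \<le> j} \<in> sets (FF j)" by measurable
  then show ?thesis unfolding Ev_def by simp
qed

lemma Ev_space: "Ev k j \<subseteq> space M"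
  unfolding Ev_def by auto

lemma Ev_kk: "Ev k k = space M"
  unfolding Ev_def by auto

lemma Ev_mono: "Ev (Suc k) j \<subseteq> Ev k j"
  unfolding Ev_def zeta_rv_def using zeta_mono_step by (auto intro: order_trans)

lemma Gs_Int_stable: "Int_stable (Gs i)"
  by (cases i) (simp_all add: Gs_def Int_stable_preimgs)

lemma indep_zero:
  assumes H: "H \<in> sets (FF j)" and int: "integrable M (\<lambda>\<omega>. w j \<omega> $ l)"
    and mean: "(\<integral>\<omega>. w j \<omega> $ l \<partial>M) = 0"
  shows "(\<integral>\<omega>. indicator H \<omega> * (w j \<omega> $ l) \<partial>M) = 0"
proof -
  define I where "I = (\<lambda>b. if b then {i. okF j i} else {PW j})"
  have disj: "disjoint_family_on I UNIV"
    unfolding disjoint_family_on_def I_def okF_def by auto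
  have "indep_sets Gs (\<Union>b\<in>UNIV. I b)" using indep_Gs by (rule indep_sets_mono_index[rotated]) auto
  from indep_sets_collect_sigma[OF this Gs_Int_stable disj]
  have "indep_sets (\<lambda>b. sigma_sets (space M) (\<Union>i\<in>I b. Gs i)) UNIV" .
  then have ind2: "indep_set (sigma_sets (space M) (GF j)) (sigma_sets (space M) (Gs (PW j)))"
    unfolding indep_set_def I_def GF_def
    by (rule indep_sets_cong[THEN iffD1, rotated 2]) (auto split: bool.splits)
  have Hs: "H \<in> sets M" using H FF_sub by blast
  have [measurable]: "w j \<in> borel_measurable M" by (rule w_meas)
  have "indep_var borel (indicator H) borel (\<lambda>\<omega>. w j \<omega> $ l)"
    unfolding indep_var_eq
  proof (intro conjI)
    show "random_variable borel (indicator H :: 'a \<Rightarrow> real)" using Hs by measurable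
    show "random_variable borel (\<lambda>\<omega>. w j \<omega> $ l)" by measurable
    have s1: "sigma_sets (space M) {(indicator H :: 'a \<Rightarrow> real) -` S \<inter> space M |S. S \<in> sets borel} \<subseteq> sigma_sets (space M) (GF j)"
    proof (rule sigma_algebra.sigma_sets_subset[OF sigma_algebra_sigma_sets[OF GF_Pow]], safe)
      fix S :: "real set" assume "S \<in> sets borel"
      have "(indicator H :: 'a \<Rightarrow> real) -` S \<inter> space M \<in> sets (FF j)"
      proof -
        have "(indicator H :: 'a \<Rightarrow> real) \<in> borel_measurable (FF j)" using H by simp
        from measurable_sets[OF this \<open>S \<in> sets borel\<close>] show ?thesis by simp
      qed
      then show "(indicator H :: 'a \<Rightarrow> real) -` S \<inter> space M \<in> sigma_sets (space M) (GF j)"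
        unfolding sets_FF .
    qed
    have s2: "sigma_sets (space M) {(\<lambda>\<omega>. w j \<omega> $ l) -` S \<inter> space M |S. S \<in> sets borel} \<subseteq> sigma_sets (space M) (Gs (PW j))"
    proof (rule sigma_sets_subseteq, safe)
      fix S :: "real set" assume S: "S \<in> sets borel"
      have "(\<lambda>v::real^'n. v $ l) \<in> borel_measurable borel" by (rule vec_nth_meas) simp
      then have "{v::real^'n. v $ l \<in> S} \<in> sets borel" using S measurable_sets[of "\<lambda>v::real^'n. v $ l" borel borel S] by (simp add: vimage_def)
      moreover have "(\<lambda>\<omega>. w j \<omega> $ l) -` S \<inter> space M = w j -` {v. v $ l \<in> S} \<inter> space M" by auto
      ultimately show "(\<lambda>\<omega>. w j \<omega> $ l) -` S \<inter> space M \<in> Gs (PW j)"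
        unfolding Gs_def preimgs_def by (auto intro!: exI[where x="{v. v $ l \<in> S}"])
    qed
    show "indep_set (sigma_sets (space M) {(indicator H :: 'a \<Rightarrow> real) -` S \<inter> space M |S. S \<in> sets borel})
       (sigma_sets (space M) {(\<lambda>\<omega>. w j \<omega> $ l) -` S \<inter> space M |S. S \<in> sets borel})"
      using ind2 s1 s2 unfolding indep_sets2_eq by blast
  qed
  moreover have "integrable M (indicator H :: 'a \<Rightarrow> real)" using Hs by (intro integrable_real_indicator) (auto simp: emeasure_eq_measure)
  ultimately have "(\<integral>\<omega>. indicator H \<omega> * (w j \<omega> $ l) \<partial>M) = (\<integral>\<omega>. indicator H \<omega> \<partial>M) * (\<integral>\<omega>. w j \<omega> $ l \<partial>M)"
    using int by (rule indep_var_lebesgue_integral)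
  then show ?thesis using mean by simp
qed

end

lemma gauss_comp:
  fixes X :: "'a \<Rightarrow> real^'n"
  assumes P: "prob_space M" and G: "gaussian_vec M X mu C"
  shows "integrable M (\<lambda>\<omega>. X \<omega> $ i)" "integrable M (\<lambda>\<omega>. (X \<omega> $ i)\<^sup>2)"
    "(\<integral>\<omega>. X \<omega> $ i \<partial>M) = mu $ i"
proof -
  interpret prob_space M by (rule P)
  define v :: "real^'n" where "v = axis i 1"
  have psd: "psd_mat C" and Xm[measurable]: "X \<in> borel_measurable M"
    and D: "distr M borel (\<lambda>\<omega>. v \<bullet> X \<omega>) =
        (if v \<bullet> (C *v v) = 0 then return borel (v \<bullet> mu)
         else density lborel (normal_density (v \<bullet> mu) (sqrt (v \<bullet> (C *v v)))))"
    using G unfolding gaussian_vec_def by auto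
  have vX: "\<And>y. v \<bullet> y = y $ i" unfolding v_def by (simp add: cart_eq_inner_axis inner_commute)
  define s where "s = v \<bullet> (C *v v)"
  have s0: "s \<ge> 0" using psd unfolding psd_mat_def s_def by auto
  define Y where "Y = (\<lambda>\<omega>. X \<omega> $ i)"
  have Ym[measurable]: "Y \<in> borel_measurable M" unfolding Y_def by measurable
  have DY: "distr M borel Y = (if s = 0 then return borel (mu $ i)
         else density lborel (normal_density (mu $ i) (sqrt s)))"
    using D unfolding Y_def s_def vX .
  have "integrable M Y \<and> integrable M (\<lambda>\<omega>. (Y \<omega>)\<^sup>2) \<and> (\<integral>\<omega>. Y \<omega> \<partial>M) = mu $ i"
  proof (cases "s = 0")
    case True
    then have DY': "distr M borel Y = return borel (mu $ i)" using DY by simp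
    have "AE y in distr M borel Y. y = mu $ i" unfolding DY' by (subst AE_return) auto
    then have AEY: "AE \<omega> in M. Y \<omega> = mu $ i" by (subst (asm) AE_distr_iff) auto
    have i1: "integrable M Y" by (rule integrable_cong_AE_imp[OF _ _ AE_symmetric[OF AEY]]) auto
    have i2: "integrable M (\<lambda>\<omega>. (Y \<omega>)\<^sup>2)"
      by (rule integrable_cong_AE_imp[of _ "\<lambda>\<omega>. (mu $ i)\<^sup>2"]) (use AEY in auto)
    have "(\<integral>\<omega>. Y \<omega> \<partial>M) = (\<integral>\<omega>. mu $ i \<partial>M)" by (rule integral_cong_AE) (use AEY in auto)
    then show ?thesis using i1 i2 by (simp add: prob_space)
  next
    case False
    then have sp: "0 < sqrt s" using s0 by simp
    have DY': "distr M lborel Y = density lborel (normal_density (mu $ i) (sqrt s))"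
    proof -
      have "distr M lborel Y = distr M borel Y" by (rule distr_cong) auto
      then show ?thesis using DY False by simp
    qed
    have dist: "distributed M lborel Y (normal_density (mu $ i) (sqrt s))"
      unfolding distributed_def using DY' by auto
    have i1: "integrable M Y"
      using distributed_integrable[OF dist, of "\<lambda>x. x"] integrable_normal_moment_nz_1[OF sp] by simp
    have "integrable lborel (\<lambda>x. normal_density (mu $ i) (sqrt s) x * (x - mu $ i)^2
        + 2 * (mu $ i) * (normal_density (mu $ i) (sqrt s) x * x) - (mu $ i)\<^sup>2 * normal_density (mu $ i) (sqrt s) x)"
      using integrable_normal_moment[OF sp, of "mu $ i" 2] integrable_normal_moment_nz_1[OF sp, of "mu $ i"]
        integrable_normal_density[OF sp, of "mu $ i"]
      by (intro Bochner_Integration.integrable_diff Bochner_Integration.integrable_add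
          Bochner_Integration.integrable_mult_right) auto
    moreover have "\<And>x. normal_density (mu $ i) (sqrt s) x * (x - mu $ i)^2
        + 2 * (mu $ i) * (normal_density (mu $ i) (sqrt s) x * x) - (mu $ i)\<^sup>2 * normal_density (mu $ i) (sqrt s) x
        = normal_density (mu $ i) (sqrt s) x * x\<^sup>2"
      by (simp add: power2_eq_square algebra_simps)
    ultimately have "integrable lborel (\<lambda>x. normal_density (mu $ i) (sqrt s) x * x\<^sup>2)" by simp
    then have i2: "integrable M (\<lambda>\<omega>. (Y \<omega>)\<^sup>2)"
      using distributed_integrable[OF dist, of "\<lambda>x. x\<^sup>2"] by simp
    have "expectation Y = mu $ i" by (rule normal_distributed_expectation[OF sp dist])
    then show ?thesis using i1 i2 by simp
  qed
  then show "integrable M (\<lambda>\<omega>. X \<omega> $ i)" "integrable M (\<lambda>\<omega>. (X \<omega> $ i)\<^sup>2)"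
    "(\<integral>\<omega>. X \<omega> $ i \<partial>M) = mu $ i" unfolding Y_def by auto
qed

context setting begin

abbreviation "gc k \<equiv> gens_c M x tau dl u k"
abbreviation "ge k \<equiv> gens_e M x tau dl u k"

definition ok :: "nat \<Rightarrow> nat \<Rightarrow> 'a set \<Rightarrow> bool" where
  "ok k j S \<longleftrightarrow> S \<inter> Ev k j \<in> sets (FF j)"

definition okf :: "nat \<Rightarrow> nat \<Rightarrow> ('a \<Rightarrow> 'b) \<Rightarrow> 'b measure \<Rightarrow> bool" where
  "okf k j f N \<longleftrightarrow> (\<forall>S\<in>preimgs M f N. ok k j S)"

lemma okf_agr:
  assumes "space N = UNIV"
  shows "okf k j f N \<longleftrightarrow> agr (FF j) (Ev k j) f N"
proof
  assume "okf k j f N"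
  then show "agr (FF j) (Ev k j) f N"
    unfolding okf_def ok_def
    by (intro agr_of_sets[where c=undefined]) (auto simp: assms Ev_FF)
next
  assume "agr (FF j) (Ev k j) f N"
  from agr_sets[OF this Ev_FF space_FF Ev_space]
  show "okf k j f N" unfolding okf_def ok_def .
qed

lemma okf_meas:
  assumes "f \<in> measurable (FF j') N" "j' \<le> j"
  shows "okf k j f N"
proof -
  have "f \<in> measurable (FF j) N" using assms by (rule meas_FF_mono)
  then have "preimgs M f N \<subseteq> sets (FF j)" by (rule preimgs_of_meas) simp
  then show ?thesis unfolding okf_def ok_def using Ev_FF by auto
qed

lemma ok_restrict: "ok k j S \<Longrightarrow> ok (Suc k) j S"
proof -
  assume "ok k j S"
  moreover have "S \<inter> Ev (Suc k) j = (S \<inter> Ev k j) \<inter> Ev (Suc k) j" using Ev_mono by auto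
  ultimately show ?thesis unfolding ok_def using Ev_FF by auto
qed

lemma ok_sigma:
  assumes "f \<in> measurable (sigma (space M) G) N" "G \<subseteq> Pow (space M)" "\<forall>S\<in>G. ok k j S"
  shows "okf k j f N"
  unfolding okf_def
proof
  fix S assume "S \<in> preimgs M f N"
  then obtain A where A: "A \<in> sets N" "S = f -` A \<inter> space M" unfolding preimgs_def by blast
  have "S \<in> sigma_sets (space M) G" using measurable_sets[OF assms(1) A(1)] A(2) assms(2) by simp
  then show "ok k j S" unfolding ok_def
    by (rule sigma_sets_trace) (use assms(3) Ev_FF in \<open>auto simp: ok_def\<close>)
qed

lemma gc_Pow: "gc k \<subseteq> Pow (space M)"
  unfolding gens_c_def preimgs_def by auto

lemma ge_Pow: "ge k \<subseteq> Pow (space M)"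
  unfolding gens_e_def gens_c_def preimgs_def by auto

lemma gc_Suc: "gc (Suc k) = gc k \<union> preimgs M (eta_rv tau dl (Suc k)) (count_space UNIV)
   \<union> preimgs M (obs_c x tau dl (Suc k)) borel \<union> preimgs M (dl k) (count_space UNIV) \<union> preimgs M (u k) borel"
  unfolding gens_c_def atMost_Suc lessThan_Suc by auto

lemma gc_0: "gc 0 = preimgs M (eta_rv tau dl 0) (count_space UNIV) \<union> preimgs M (obs_c x tau dl 0) borel"
  unfolding gens_c_def by auto

lemma ge_0: "ge 0 = gc 0 \<union> preimgs M (zeta_rv tau 0) (count_space UNIV) \<union> preimgs M (obs_e x tau 0) borel"
  unfolding gens_e_def by auto

lemma ge_Suc: "ge (Suc k) \<subseteq> gc (Suc k) \<union> ge k \<union> preimgs M (zeta_rv tau (Suc k)) (count_space UNIV)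
   \<union> preimgs M (obs_e x tau (Suc k)) borel"
  unfolding gens_e_def atMost_Suc by auto

lemma gc_mono: "gc k \<subseteq> gc (Suc k)"
  unfolding gc_Suc by auto

lemma eta_rv_Suc: "eta_rv tau dl (Suc k) \<omega> = (if dl k \<omega> then enat (zeta_rv tau k \<omega> + 1) else eta_rv tau dl k \<omega> + 1)"
  unfolding eta_rv_def zeta_rv_def by simp

lemma agrI: "f' \<in> measurable F N \<Longrightarrow> \<forall>\<omega>\<in>E. f \<omega> = f' \<omega> \<Longrightarrow> agr F E f N"
  unfolding agr_def by blast

lemma okf_Un: "(\<forall>S\<in>preimgs M f N. ok k j S) = okf k j f N"
  unfolding okf_def ..

lemma S_u:
  assumes "\<forall>S\<in>gc k. ok k j S"
  shows "okf k j (u k) borel"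
  using ctrl[of k] unfolding Ic_def by (rule ok_sigma[OF _ gc_Pow assms])

lemma S_dl:
  assumes "\<forall>S\<in>ge k. ok k j S"
  shows "okf k j (dl k) (count_space UNIV)"
proof (rule ok_sigma[OF trig])
  show "ge k \<union> preimgs M (xi k) borel \<subseteq> Pow (space M)" using ge_Pow preimgs_Pow by blast
  have "okf k j (xi k) borel" using xi_FF[of k 0] by (rule okf_meas) simp
  then show "\<forall>S\<in>ge k \<union> preimgs M (xi k) borel. ok k j S" using assms unfolding okf_def by blast
qed

lemma S_eta:
  assumes "okf k j (dl k) (count_space UNIV)" "okf k j (eta_rv tau dl k) (count_space UNIV)"
  shows "okf k j (eta_rv tau dl (Suc k)) (count_space UNIV)"
proof -
  obtain d' where d': "d' \<in> measurable (FF j) (count_space UNIV)" "\<And>\<omega>. \<omega> \<in> Ev k j \<Longrightarrow> dl k \<omega> = d' \<omega>"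
    using assms(1) unfolding okf_agr[OF space_count_space] agr_def by blast
  obtain e' where e': "e' \<in> measurable (FF j) (count_space UNIV)" "\<And>\<omega>. \<omega> \<in> Ev k j \<Longrightarrow> eta_rv tau dl k \<omega> = e' \<omega>"
    using assms(2) unfolding okf_agr[OF space_count_space] agr_def by blast
  note [measurable] = d'(1) e'(1) zeta_FF
  have "(\<lambda>\<omega>. if d' \<omega> then enat (zeta_rv tau k \<omega> + 1) else e' \<omega> + 1) \<in> measurable (FF j) (count_space UNIV)"
    by measurable
  moreover have "\<forall>\<omega>\<in>Ev k j. eta_rv tau dl (Suc k) \<omega> = (if d' \<omega> then enat (zeta_rv tau k \<omega> + 1) else e' \<omega> + 1)"
    using d'(2) e'(2) by (simp add: eta_rv_Suc)
  ultimately have "agr (FF j) (Ev k j) (eta_rv tau dl (Suc k)) (count_space UNIV)"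
    by (rule agrI)
  then show ?thesis unfolding okf_agr[OF space_count_space] .
qed

lemma S_obsc:
  assumes "okf k j (eta_rv tau dl (Suc k)) (count_space UNIV)" "\<And>i. i \<le> Suc k \<Longrightarrow> x i \<in> borel_measurable (FF i)"
  shows "okf k j (obs_c x tau dl (Suc k)) borel"
proof -
  obtain e' where e': "e' \<in> measurable (FF j) (count_space UNIV)" "\<And>\<omega>. \<omega> \<in> Ev k j \<Longrightarrow> eta_rv tau dl (Suc k) \<omega> = e' \<omega>"
    using assms(1) unfolding okf_agr[OF space_count_space] agr_def by blast
  define g where "g = (\<lambda>(e::enat) \<omega>. case e of enat e \<Rightarrow> x (min j (Suc k - e)) \<omega> | \<infinity> \<Rightarrow> 0)"
  have "(\<lambda>\<omega>. g (e' \<omega>) \<omega>) \<in> borel_measurable (FF j)"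
  proof (rule measurable_compose_countable[OF _ e'(1)])
    fix e :: enat
    show "g e \<in> borel_measurable (FF j)"
    proof (cases e)
      case (enat n)
      have "x (min j (Suc k - n)) \<in> borel_measurable (FF (min j (Suc k - n)))" using assms(2) by simp
      then have "x (min j (Suc k - n)) \<in> borel_measurable (FF j)" by (rule meas_FF_mono) simp
      then show ?thesis unfolding g_def enat by simp
    next
      case infinity then show ?thesis unfolding g_def by simp
    qed
  qed
  moreover have "\<forall>\<omega>\<in>Ev k j. obs_c x tau dl (Suc k) \<omega> = g (e' \<omega>) \<omega>"
  proof
    fix \<omega> assume om: "\<omega> \<in> Ev k j"
    show "obs_c x tau dl (Suc k) \<omega> = g (e' \<omega>) \<omega>"
    proof (cases "e' \<omega>")
      case (enat n)
      then have "eta (\<lambda>j. tau j \<omega>) (\<lambda>j. dl j \<omega>) (Suc k) = enat n" using e'(2)[OF om] unfolding eta_rv_def by simp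
      from eta_enat[OF this] have "Suc k - n \<le> k - zeta_rv tau k \<omega>" unfolding zeta_rv_def by simp
      also have "\<dots> \<le> j" using om unfolding Ev_def by simp
      finally have "min j (Suc k - n) = Suc k - n" by simp
      then show ?thesis using enat e'(2)[OF om] unfolding obs_c_def g_def by simp
    next
      case infinity
      then show ?thesis using e'(2)[OF om] unfolding obs_c_def g_def by simp
    qed
  qed
  ultimately have "agr (FF j) (Ev k j) (obs_c x tau dl (Suc k)) borel" by (rule agrI)
  then show ?thesis unfolding okf_agr[OF space_borel] .
qed

lemma S_obse:
  assumes "\<And>i. i \<le> k \<Longrightarrow> x i \<in> borel_measurable (FF i)"
  shows "okf k j (obs_e x tau k) borel"
proof -
  define g where "g = (\<lambda>(n::nat) \<omega>. x (min j (min k n)) \<omega>)"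
  have gm: "(\<lambda>\<omega>. k - zeta_rv tau k \<omega>) \<in> measurable (FF j) (count_space UNIV)"
    using zeta_FF by measurable
  have "(\<lambda>\<omega>. g (k - zeta_rv tau k \<omega>) \<omega>) \<in> borel_measurable (FF j)"
  proof (rule measurable_compose_countable[OF _ gm])
    fix n :: nat
    have "x (min j (min k n)) \<in> borel_measurable (FF (min j (min k n)))" using assms by simp
    then show "g n \<in> borel_measurable (FF j)" unfolding g_def by (rule meas_FF_mono) simp
  qed
  moreover have "\<forall>\<omega>\<in>Ev k j. obs_e x tau k \<omega> = g (k - zeta_rv tau k \<omega>) \<omega>"
    unfolding Ev_def obs_e_def g_def by auto
  ultimately have "agr (FF j) (Ev k j) (obs_e x tau k) borel" by (rule agrI)
  then show ?thesis unfolding okf_agr[OF space_borel] .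
qed

lemma S_x:
  assumes "x k \<in> borel_measurable (FF k)" "okf k k (u k) borel"
  shows "x (Suc k) \<in> borel_measurable (FF (Suc k))"
proof -
  have "agr (FF k) (Ev k k) (u k) borel" using assms(2) unfolding okf_agr[OF space_borel] .
  then have "u k \<in> borel_measurable (FF k)" unfolding Ev_kk by (rule agr_space) simp
  then have [measurable]: "u k \<in> borel_measurable (FF (Suc k))" by (rule meas_FF_mono) simp
  have [measurable]: "x k \<in> borel_measurable (FF (Suc k))" using assms(1) by (rule meas_FF_mono) simp
  have [measurable]: "w k \<in> borel_measurable (FF (Suc k))" by (rule w_FF) simp
  have "(\<lambda>\<omega>. A *v x k \<omega> + B *v u k \<omega> + w k \<omega>) \<in> borel_measurable (FF (Suc k))" by measurable
  moreover have "x (Suc k) \<in> borel_measurable (FF (Suc k)) \<longleftrightarrow> (\<lambda>\<omega>. A *v x k \<omega> + B *v u k \<omega> + w k \<omega>) \<in> borel_measurable (FF (Suc k))"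
    by (rule measurable_cong) (simp add: dyn)
  ultimately show ?thesis by blast
qed

lemma okf_zeta: "okf k j (zeta_rv tau t) (count_space UNIV)"
  by (rule okf_meas[OF zeta_FF[of t 0]]) simp

lemma okf_gc0: "\<forall>S\<in>gc 0. ok k j S"
proof -
  have "eta_rv tau dl 0 = (\<lambda>\<omega>. \<infinity>)" unfolding eta_rv_def by simp
  then have "okf k j (eta_rv tau dl 0) (count_space UNIV)" by (intro okf_meas[of _ 0]) auto
  moreover have "obs_c x tau dl 0 = (\<lambda>\<omega>. 0)" unfolding obs_c_def eta_rv_def by simp
  then have "okf k j (obs_c x tau dl 0) borel" by (intro okf_meas[of _ 0]) auto
  ultimately show ?thesis unfolding gc_0 okf_def by blast
qed

definition INV :: "nat \<Rightarrow> bool" where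
  "INV k \<longleftrightarrow> (\<forall>i\<le>Suc k. x i \<in> borel_measurable (FF i)) \<and> (\<forall>j. \<forall>S\<in>gc (Suc k) \<union> ge k. ok k j S)"

lemma INV_0: "INV 0"
proof -
  have x0: "x 0 \<in> borel_measurable (FF 0)" by (rule x0_FF)
  have ge0: "\<forall>S\<in>ge 0. ok 0 j S" for j
    using okf_gc0 okf_zeta S_obse[of 0 j] x0 unfolding ge_0 okf_def by auto
  have dl0: "okf 0 j (dl 0) (count_space UNIV)" for j using S_dl[OF ge0] .
  have u0: "okf 0 j (u 0) borel" for j using S_u[OF okf_gc0] .
  have x1: "x 1 \<in> borel_measurable (FF 1)" using S_x[OF x0 u0] by simp
  have eta0: "okf 0 j (eta_rv tau dl 0) (count_space UNIV)" for j
    using okf_gc0 unfolding gc_0 okf_def by blast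
  have eta1: "okf 0 j (eta_rv tau dl (Suc 0)) (count_space UNIV)" for j using S_eta[OF dl0 eta0] .
  have xs: "\<And>i. i \<le> Suc 0 \<Longrightarrow> x i \<in> borel_measurable (FF i)" using x0 x1 by (auto simp: le_Suc_eq)
  have obs1: "okf 0 j (obs_c x tau dl (Suc 0)) borel" for j using S_obsc[OF eta1 xs] .
  have part2: "\<forall>S\<in>gc (Suc 0) \<union> ge 0. ok 0 j S" for j
    using ge0[of j] okf_gc0 eta1[of j] obs1[of j] dl0[of j] u0[of j] unfolding gc_Suc okf_def by blast
  show ?thesis unfolding INV_def using xs part2 by blast
qed

lemma INV_Suc: "INV k \<Longrightarrow> INV (Suc k)"
proof -
  assume I: "INV k"
  then have xs: "\<And>i. i \<le> Suc k \<Longrightarrow> x i \<in> borel_measurable (FF i)"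
    and old: "\<And>j. \<forall>S\<in>gc (Suc k) \<union> ge k. ok k j S" unfolding INV_def by auto
  have old': "\<forall>S\<in>gc (Suc k) \<union> ge k. ok (Suc k) j S" for j using old ok_restrict by blast
  have geS: "\<forall>S\<in>ge (Suc k). ok (Suc k) j S" for j
  proof -
    have "okf (Suc k) j (obs_e x tau (Suc k)) borel" using S_obse xs by blast
    then show ?thesis using ge_Suc[of k] old'[of j] okf_zeta[of "Suc k" j "Suc k"] unfolding okf_def by blast
  qed
  have gcS: "\<forall>S\<in>gc (Suc k). ok (Suc k) j S" for j using old' by blast
  have dlS: "okf (Suc k) j (dl (Suc k)) (count_space UNIV)" for j using S_dl[OF geS] .
  have uS: "okf (Suc k) j (u (Suc k)) borel" for j using S_u[OF gcS] .
  have xSS: "x (Suc (Suc k)) \<in> borel_measurable (FF (Suc (Suc k)))" using S_x[OF xs[OF order_refl] uS] .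
  have xs': "\<And>i. i \<le> Suc (Suc k) \<Longrightarrow> x i \<in> borel_measurable (FF i)" using xs xSS by (auto simp: le_Suc_eq)
  have etaS: "okf (Suc k) j (eta_rv tau dl (Suc k)) (count_space UNIV)" for j
    using gcS[of j] unfolding gc_Suc okf_def by blast
  have etaSS: "okf (Suc k) j (eta_rv tau dl (Suc (Suc k))) (count_space UNIV)" for j using S_eta[OF dlS etaS] .
  have obsSS: "okf (Suc k) j (obs_c x tau dl (Suc (Suc k))) borel" for j using S_obsc[OF etaSS xs'] .
  have part2: "\<forall>S\<in>gc (Suc (Suc k)) \<union> ge (Suc k). ok (Suc k) j S" for j
      using geS[of j] gcS[of j] etaSS[of j] obsSS[of j] dlS[of j] uS[of j]
      unfolding gc_Suc[of "Suc k"] okf_def by blast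
  show ?thesis unfolding INV_def using xs' part2 by blast
qed

lemma INV_all: "INV k"
  by (induction k) (auto intro: INV_0 INV_Suc)

end

context setting begin

lemma x_FF: "x k \<in> borel_measurable (FF k)"
  using INV_all[of k] unfolding INV_def by auto

lemma x_meas[measurable]: "x k \<in> borel_measurable M"
  using x_FF by (rule meas_FF_M)

lemma gc_okS: "\<forall>S\<in>gc (Suc k). ok k j S"
  using INV_all[of k] unfolding INV_def by auto

lemma okf_u: "okf k j (u k) borel"
  using gc_okS[of k j] unfolding gc_Suc okf_def by blast

lemma okf_dl: "okf k j (dl k) (count_space UNIV)"
  using gc_okS[of k j] unfolding gc_Suc okf_def by blast

lemma okf_space: "okf k k f N \<Longrightarrow> space N = UNIV \<Longrightarrow> f \<in> measurable (FF k) N"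
  using agr_space[of "FF k" M f N] okf_agr[of N k k f] Ev_kk[of k] by simp

lemma u_FF: "u k \<in> borel_measurable (FF k)"
  using okf_space[OF okf_u] by simp

lemma dl_FF: "dl k \<in> measurable (FF k) (count_space UNIV)"
  using okf_space[OF okf_dl] by simp

lemma u_meas[measurable]: "u k \<in> borel_measurable M"
  using u_FF by (rule meas_FF_M)

lemma dl_meas[measurable]: "dl k \<in> measurable M (count_space UNIV)"
  using dl_FF by (rule meas_FF_M)

lemma trace_IcS:
  assumes "G \<in> sigma_sets (space M) (gc (Suc k))"
  shows "G \<inter> Ev k j \<in> sets (FF j)"
  by (rule sigma_sets_trace[OF assms]) (use gc_okS[of k j] Ev_FF in \<open>auto simp: ok_def\<close>)

lemma sets_Ic: "sets (Ic M x tau dl u k) = sigma_sets (space M) (gc k)"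
  unfolding Ic_def using gc_Pow by simp

lemma space_Ic[simp]: "space (Ic M x tau dl u k) = space M"
  unfolding Ic_def using gc_Pow by simp

lemma gcdl_Pow: "gc k \<union> preimgs M (dl k) (count_space UNIV) \<subseteq> Pow (space M)"
  using gc_Pow preimgs_Pow by blast

lemma sets_Icdl: "sets (Ic_dl M x tau dl u k) = sigma_sets (space M) (gc k \<union> preimgs M (dl k) (count_space UNIV))"
  unfolding Ic_dl_def using gcdl_Pow by simp

lemma space_Icdl[simp]: "space (Ic_dl M x tau dl u k) = space M"
  unfolding Ic_dl_def using gcdl_Pow by simp

lemma Ic_sub_Icdl: "sets (Ic M x tau dl u k) \<subseteq> sets (Ic_dl M x tau dl u k)"
  unfolding sets_Ic sets_Icdl by (rule sigma_sets_subseteq) auto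

lemma Icdl_sub_IcS: "sets (Ic_dl M x tau dl u k) \<subseteq> sets (Ic M x tau dl u (Suc k))"
  unfolding sets_Ic sets_Icdl by (rule sigma_sets_subseteq) (auto simp: gc_Suc)

lemma IcS_sub_FF: "sets (Ic M x tau dl u (Suc k)) \<subseteq> sets (FF k)"
proof
  fix G assume "G \<in> sets (Ic M x tau dl u (Suc k))"
  then have G: "G \<in> sigma_sets (space M) (gc (Suc k))" unfolding sets_Ic .
  have "G \<subseteq> space M" using sigma_sets_into_sp[OF gc_Pow G] .
  then have "G \<inter> Ev k k = G" unfolding Ev_kk by auto
  then show "G \<in> sets (FF k)" using trace_IcS[OF G, of k] by simp
qed

lemma Ic_sub_FF: "sets (Ic M x tau dl u k) \<subseteq> sets (FF k)"
  using Ic_sub_Icdl Icdl_sub_IcS IcS_sub_FF by blast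

lemma Icdl_sub_FF: "sets (Ic_dl M x tau dl u k) \<subseteq> sets (FF k)"
  using Icdl_sub_IcS IcS_sub_FF by blast

lemma Ic_sub_M: "sets (Ic M x tau dl u k) \<subseteq> sets M"
  using Ic_sub_FF FF_sub by blast

lemma Icdl_sub_M: "sets (Ic_dl M x tau dl u k) \<subseteq> sets M"
  using Icdl_sub_FF FF_sub by blast

lemma sfs_of_sub: "sets F \<subseteq> sets M \<Longrightarrow> space F = space M \<Longrightarrow> sigma_finite_subalgebra M F"
  by (rule finite_measure_subalgebra_is_sigma_finite)
     (simp add: finite_measure_subalgebra_def finite_measure_subalgebra_axioms_def subalgebra_def finite_measure_axioms)

lemma sfs_Ic: "sigma_finite_subalgebra M (Ic M x tau dl u k)"
  by (rule sfs_of_sub[OF Ic_sub_M]) simp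

lemma sfs_Icdl: "sigma_finite_subalgebra M (Ic_dl M x tau dl u k)"
  by (rule sfs_of_sub[OF Icdl_sub_M]) simp

lemma meas_sigma_gen:
  assumes "preimgs M f N \<subseteq> G" "G \<subseteq> Pow (space M)" "space N = UNIV"
  shows "f \<in> measurable (sigma (space M) G) N"
  by (rule meas_of_preimgs) (use assms in auto)

lemma u_Ic: "u k \<in> borel_measurable (Ic M x tau dl u k)" by (rule ctrl)

lemma u_IcS: "u k \<in> borel_measurable (Ic M x tau dl u (Suc k))"
  unfolding Ic_def by (rule meas_sigma_gen[OF _ gc_Pow]) (auto simp: gc_Suc)

lemma dl_IcS: "dl k \<in> measurable (Ic M x tau dl u (Suc k)) (count_space UNIV)"
  unfolding Ic_def by (rule meas_sigma_gen[OF _ gc_Pow]) (auto simp: gc_Suc)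

lemma eta_IcS: "eta_rv tau dl (Suc k) \<in> measurable (Ic M x tau dl u (Suc k)) (count_space UNIV)"
  unfolding Ic_def by (rule meas_sigma_gen[OF _ gc_Pow]) (auto simp: gc_Suc)

lemma obs_IcS: "obs_c x tau dl (Suc k) \<in> borel_measurable (Ic M x tau dl u (Suc k))"
  unfolding Ic_def by (rule meas_sigma_gen[OF _ gc_Pow]) (auto simp: gc_Suc)

lemma dl_Icdl: "dl k \<in> measurable (Ic_dl M x tau dl u k) (count_space UNIV)"
  unfolding Ic_dl_def by (rule meas_sigma_gen[OF _ gcdl_Pow]) auto

lemma eta_Icdl: "eta_rv tau dl k \<in> measurable (Ic_dl M x tau dl u k) (count_space UNIV)"
  unfolding Ic_dl_def by (rule meas_sigma_gen[OF _ gcdl_Pow]) (auto simp: gens_c_def)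

lemma obs_Icdl: "obs_c x tau dl k \<in> borel_measurable (Ic_dl M x tau dl u k)"
  unfolding Ic_dl_def by (rule meas_sigma_gen[OF _ gcdl_Pow]) (auto simp: gens_c_def)

lemma meas_sub: "f \<in> measurable F N \<Longrightarrow> sets F \<subseteq> sets G \<Longrightarrow> space F = space G \<Longrightarrow> f \<in> measurable G N"
  unfolding measurable_def by auto

lemma u_Icdl: "u k \<in> borel_measurable (Ic_dl M x tau dl u k)"
  using meas_sub[OF u_Ic Ic_sub_Icdl] by simp

definition sqi :: "('a \<Rightarrow> real) \<Rightarrow> bool" where
  "sqi f \<longleftrightarrow> f \<in> borel_measurable M \<and> integrable M (\<lambda>\<omega>. (f \<omega>)\<^sup>2)"

lemma sqi_int: "sqi f \<Longrightarrow> integrable M f"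
  unfolding sqi_def using square_integrable_imp_integrable by blast

lemma sqi_prod: "sqi f \<Longrightarrow> sqi g \<Longrightarrow> integrable M (\<lambda>\<omega>. f \<omega> * g \<omega>)"
proof -
  assume f: "sqi f" and g: "sqi g"
  then have [measurable]: "f \<in> borel_measurable M" "g \<in> borel_measurable M" unfolding sqi_def by auto
  have int: "integrable M (\<lambda>\<omega>. (f \<omega>)\<^sup>2 + (g \<omega>)\<^sup>2)" using f g unfolding sqi_def by auto
  have b: "norm (f \<omega> * g \<omega>) \<le> norm ((f \<omega>)\<^sup>2 + (g \<omega>)\<^sup>2)" for \<omega>
  proof -
    have "0 \<le> (\<bar>f \<omega>\<bar> - \<bar>g \<omega>\<bar>)\<^sup>2" by simp
    then have "2 * \<bar>f \<omega>\<bar> * \<bar>g \<omega>\<bar> \<le> (f \<omega>)\<^sup>2 + (g \<omega>)\<^sup>2" by (simp add: power2_eq_square algebra_simps)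
    moreover have "0 \<le> \<bar>f \<omega>\<bar> * \<bar>g \<omega>\<bar>" by simp
    ultimately have "\<bar>f \<omega>\<bar> * \<bar>g \<omega>\<bar> \<le> (f \<omega>)\<^sup>2 + (g \<omega>)\<^sup>2" by linarith
    moreover have "\<bar>(f \<omega>)\<^sup>2 + (g \<omega>)\<^sup>2\<bar> = (f \<omega>)\<^sup>2 + (g \<omega>)\<^sup>2" by simp
    ultimately show ?thesis by (simp add: abs_mult)
  qed
  show ?thesis by (rule Bochner_Integration.integrable_bound[OF int]) (measurable, rule AE_I2[OF b])
qed

lemma sqi_add: "sqi f \<Longrightarrow> sqi g \<Longrightarrow> sqi (\<lambda>\<omega>. f \<omega> + g \<omega>)"
proof -
  assume f: "sqi f" and g: "sqi g"
  then have [measurable]: "f \<in> borel_measurable M" "g \<in> borel_measurable M" unfolding sqi_def by auto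
  have "integrable M (\<lambda>\<omega>. (f \<omega>)\<^sup>2 + (g \<omega>)\<^sup>2 + 2 * (f \<omega> * g \<omega>))"
    using f g sqi_prod[OF f g] unfolding sqi_def by auto
  moreover have "(\<lambda>\<omega>. (f \<omega> + g \<omega>)\<^sup>2) = (\<lambda>\<omega>. (f \<omega>)\<^sup>2 + (g \<omega>)\<^sup>2 + 2 * (f \<omega> * g \<omega>))"
    by (simp add: power2_eq_square algebra_simps)
  ultimately show ?thesis unfolding sqi_def by simp
qed

lemma sqi_cmult: "sqi f \<Longrightarrow> sqi (\<lambda>\<omega>. c * f \<omega>)"
proof -
  assume f: "sqi f"
  then have [measurable]: "f \<in> borel_measurable M" unfolding sqi_def by auto
  have "(\<lambda>\<omega>. c * f \<omega>) \<in> borel_measurable M" by measurable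
  moreover have "integrable M (\<lambda>\<omega>. c\<^sup>2 * (f \<omega>)\<^sup>2)" using f unfolding sqi_def by simp
  ultimately show ?thesis unfolding sqi_def by (simp add: power_mult_distrib)
qed

lemma sqi_const: "sqi (\<lambda>\<omega>. c)"
  unfolding sqi_def by simp

lemma sqi_neg: "sqi f \<Longrightarrow> sqi (\<lambda>\<omega>. - f \<omega>)"
  unfolding sqi_def by simp

lemma sqi_diff: "sqi f \<Longrightarrow> sqi g \<Longrightarrow> sqi (\<lambda>\<omega>. f \<omega> - g \<omega>)"
  using sqi_add[of f "\<lambda>\<omega>. - g \<omega>"] sqi_neg[of g] by simp

lemma sqi_sum: "finite I \<Longrightarrow> (\<And>i. i \<in> I \<Longrightarrow> sqi (f i)) \<Longrightarrow> sqi (\<lambda>\<omega>. \<Sum>i\<in>I. f i \<omega>)"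
proof (induction I rule: finite_induct)
  case empty then show ?case using sqi_const[of 0] by simp
next
  case (insert a I)
  then show ?case using sqi_add[of "f a" "\<lambda>\<omega>. \<Sum>i\<in>I. f i \<omega>"] by simp
qed

lemma sqi_cong: "(\<And>\<omega>. \<omega> \<in> space M \<Longrightarrow> f \<omega> = g \<omega>) \<Longrightarrow> sqi f \<longleftrightarrow> sqi g"
proof -
  assume e: "\<And>\<omega>. \<omega> \<in> space M \<Longrightarrow> f \<omega> = g \<omega>"
  have "f \<in> borel_measurable M \<longleftrightarrow> g \<in> borel_measurable M" by (rule measurable_cong) (simp add: e)
  moreover have "integrable M (\<lambda>\<omega>. (f \<omega>)\<^sup>2) \<longleftrightarrow> integrable M (\<lambda>\<omega>. (g \<omega>)\<^sup>2)"
    by (rule Bochner_Integration.integrable_cong) (simp_all add: e)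
  ultimately show ?thesis unfolding sqi_def by simp
qed

definition vsq :: "('a \<Rightarrow> real^'k) \<Rightarrow> bool" where
  "vsq X \<longleftrightarrow> (\<forall>i. sqi (\<lambda>\<omega>. X \<omega> $ i))"

lemma vsq_mv: "vsq X \<Longrightarrow> vsq (\<lambda>\<omega>. (C::real^'k^'l) *v X \<omega>)"
  unfolding vsq_def matrix_vector_mult_def
  by (auto intro!: sqi_sum sqi_cmult)

lemma vsq_add: "vsq X \<Longrightarrow> vsq Y \<Longrightarrow> vsq (\<lambda>\<omega>. X \<omega> + Y \<omega>)"
  unfolding vsq_def by (auto intro!: sqi_add)

lemma vsq_x0: "vsq (x 0)"
  unfolding vsq_def sqi_def using gauss_comp[OF P x0_gauss] by auto

lemma vsq_w: "vsq (w k)"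
  unfolding vsq_def sqi_def using gauss_comp[OF P w_gauss] w_meas by auto

lemma w_int: "integrable M (\<lambda>\<omega>. w k \<omega> $ l)" and w_mean: "(\<integral>\<omega>. w k \<omega> $ l \<partial>M) = 0"
  using gauss_comp[OF P w_gauss, of k l] by auto

lemma x0_int: "integrable M (\<lambda>\<omega>. x 0 \<omega> $ l)" and x0_mean: "(\<integral>\<omega>. x 0 \<omega> $ l \<partial>M) = m0 $ l"
  using gauss_comp[OF P x0_gauss, of l] by auto

lemma vsq_u: "vsq (u k)"
  unfolding vsq_def sqi_def using ctrl_L2 by auto

lemma vsq_x: "vsq (x k)"
proof (induction k)
  case 0 then show ?case by (rule vsq_x0)
next
  case (Suc k)
  have "vsq (\<lambda>\<omega>. A *v x k \<omega> + B *v u k \<omega> + w k \<omega>)"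
    by (intro vsq_add vsq_mv Suc vsq_u vsq_w)
  then show ?case unfolding vsq_def using sqi_cong[of "\<lambda>\<omega>. x (Suc k) \<omega> $ _"] dyn by simp
qed

lemma indep_zero':
  assumes "H \<in> sets (FF j)"
  shows "(\<integral>\<omega>. indicator H \<omega> * (w j \<omega> $ l) \<partial>M) = 0"
  by (rule indep_zero[OF assms w_int w_mean])

end

lemma normsq_vec: "(norm (v::real^'n))\<^sup>2 = (\<Sum>l\<in>UNIV. (v $ l)\<^sup>2)"
  unfolding power2_norm_eq_inner inner_vec_def by (simp add: power2_eq_square)

context setting begin

lemma cev_nth: "cond_exp_vec M F X \<omega> $ l = real_cond_exp M F (\<lambda>\<eta>. X \<eta> $ l) \<omega>"
  unfolding cond_exp_vec_def by simp

lemma cev_meas: "cond_exp_vec M F X \<in> borel_measurable F"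
  unfolding cond_exp_vec_def by (rule vec_lambda_meas) simp

lemma rce_sqi:
  assumes F: "sigma_finite_subalgebra M F" and f: "sqi f"
  shows "sqi (real_cond_exp M F f)"
proof -
  interpret F: sigma_finite_subalgebra M F by (rule F)
  have [measurable]: "f \<in> borel_measurable M" using f unfolding sqi_def by auto
  have fi: "integrable M f" using sqi_int[OF f] .
  have f2: "integrable M (\<lambda>\<omega>. (f \<omega>)\<^sup>2)" using f unfolding sqi_def by auto
  have J: "AE \<omega> in M. (real_cond_exp M F f \<omega>)\<^sup>2 \<le> real_cond_exp M F (\<lambda>\<omega>. (f \<omega>)\<^sup>2) \<omega>"
    using F.real_cond_exp_jensens_inequality(2)[OF fi, of UNIV 0 0 power2] f2 convex_power2 by auto
  have i2: "integrable M (real_cond_exp M F (\<lambda>\<omega>. (f \<omega>)\<^sup>2))" using F.real_cond_exp_int(1)[OF f2] .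
  have "integrable M (\<lambda>\<omega>. (real_cond_exp M F f \<omega>)\<^sup>2)"
    by (rule Bochner_Integration.integrable_bound[OF i2]) (measurable, use J in auto)
  then show ?thesis unfolding sqi_def by simp
qed

lemma part1:
  assumes g: "g \<in> borel_measurable (Ic M x tau dl u k)"
  shows "(\<integral>\<^sup>+\<omega>. ennreal ((norm (x k \<omega> - cond_exp_vec M (Ic M x tau dl u k) (x k) \<omega>))\<^sup>2) \<partial>M)
             \<le> (\<integral>\<^sup>+\<omega>. ennreal ((norm (x k \<omega> - g \<omega>))\<^sup>2) \<partial>M)"
proof (cases "(\<integral>\<^sup>+\<omega>. ennreal ((norm (x k \<omega> - g \<omega>))\<^sup>2) \<partial>M) = \<infinity>")
  case True then show ?thesis by simp
next
  case False
  define F where "F = Ic M x tau dl u k"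
  interpret F: sigma_finite_subalgebra M F unfolding F_def by (rule sfs_Ic)
  define c where "c = cond_exp_vec M F (x k)"
  have gF[measurable]: "g \<in> borel_measurable F" using g unfolding F_def .
  have gM[measurable]: "g \<in> borel_measurable M" using measurable_from_subalg[OF F.subalg gF] .
  have cF[measurable]: "c \<in> borel_measurable F" unfolding c_def by (rule cev_meas)
  have cM[measurable]: "c \<in> borel_measurable M" using measurable_from_subalg[OF F.subalg cF] .
  have fin: "(\<integral>\<^sup>+\<omega>. ennreal ((norm (x k \<omega> - g \<omega>))\<^sup>2) \<partial>M) < \<infinity>" using False by (simp add: less_top)
  have xg: "sqi (\<lambda>\<omega>. x k \<omega> $ l - g \<omega> $ l)" for l
  proof -
    have "(\<integral>\<^sup>+\<omega>. norm ((x k \<omega> $ l - g \<omega> $ l)\<^sup>2) \<partial>M) \<le> (\<integral>\<^sup>+\<omega>. ennreal ((norm (x k \<omega> - g \<omega>))\<^sup>2) \<partial>M)"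
    proof (rule nn_integral_mono)
      fix \<omega>
      have "((x k \<omega> - g \<omega>) $ l)\<^sup>2 \<le> (\<Sum>l\<in>UNIV. ((x k \<omega> - g \<omega>) $ l)\<^sup>2)"
        by (rule member_le_sum) auto
      then show "ennreal (norm ((x k \<omega> $ l - g \<omega> $ l)\<^sup>2)) \<le> ennreal ((norm (x k \<omega> - g \<omega>))\<^sup>2)"
        unfolding normsq_vec by (intro ennreal_leI) simp
    qed
    then have "(\<integral>\<^sup>+\<omega>. norm ((x k \<omega> $ l - g \<omega> $ l)\<^sup>2) \<partial>M) < \<infinity>" using fin by (rule le_less_trans)
    then have "integrable M (\<lambda>\<omega>. (x k \<omega> $ l - g \<omega> $ l)\<^sup>2)" by (intro integrableI_bounded) auto
    then show ?thesis unfolding sqi_def by auto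
  qed
  have xs: "sqi (\<lambda>\<omega>. x k \<omega> $ l)" for l using vsq_x unfolding vsq_def by auto
  have gs: "sqi (\<lambda>\<omega>. g \<omega> $ l)" for l
    using sqi_diff[OF xs xg, of l l] by simp
  have cs: "sqi (\<lambda>\<omega>. c \<omega> $ l)" for l
    unfolding c_def cev_nth using rce_sqi[OF F.sigma_finite_subalgebra_axioms xs] .
  have xc: "sqi (\<lambda>\<omega>. x k \<omega> $ l - c \<omega> $ l)" for l by (rule sqi_diff[OF xs cs])
  have cg: "sqi (\<lambda>\<omega>. c \<omega> $ l - g \<omega> $ l)" for l by (rule sqi_diff[OF cs gs])
  have cross: "(\<integral>\<omega>. (x k \<omega> $ l - c \<omega> $ l) * (c \<omega> $ l - g \<omega> $ l) \<partial>M) = 0" for l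
  proof -
    have fF: "(\<lambda>\<omega>. c \<omega> $ l - g \<omega> $ l) \<in> borel_measurable F" by measurable
    have i1: "integrable M (\<lambda>\<omega>. (c \<omega> $ l - g \<omega> $ l) * x k \<omega> $ l)" by (rule sqi_prod[OF cg xs])
    have e: "(\<integral>\<omega>. (c \<omega> $ l - g \<omega> $ l) * real_cond_exp M F (\<lambda>\<omega>. x k \<omega> $ l) \<omega> \<partial>M)
        = (\<integral>\<omega>. (c \<omega> $ l - g \<omega> $ l) * x k \<omega> $ l \<partial>M)"
      by (rule F.real_cond_exp_intg(2)[OF i1 fF]) simp
    have e': "(\<integral>\<omega>. (c \<omega> $ l - g \<omega> $ l) * c \<omega> $ l \<partial>M) = (\<integral>\<omega>. (c \<omega> $ l - g \<omega> $ l) * x k \<omega> $ l \<partial>M)"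
      using e unfolding c_def cev_nth .
    have i2: "integrable M (\<lambda>\<omega>. (c \<omega> $ l - g \<omega> $ l) * c \<omega> $ l)" by (rule sqi_prod[OF cg cs])
    have "(\<integral>\<omega>. (x k \<omega> $ l - c \<omega> $ l) * (c \<omega> $ l - g \<omega> $ l) \<partial>M)
       = (\<integral>\<omega>. (c \<omega> $ l - g \<omega> $ l) * x k \<omega> $ l - (c \<omega> $ l - g \<omega> $ l) * c \<omega> $ l \<partial>M)"
      by (rule Bochner_Integration.integral_cong) (auto simp: algebra_simps)
    also have "\<dots> = 0" using i1 i2 e' by simp
    finally show ?thesis .
  qed
  have comp: "(\<integral>\<omega>. (x k \<omega> $ l - c \<omega> $ l)\<^sup>2 \<partial>M) \<le> (\<integral>\<omega>. (x k \<omega> $ l - g \<omega> $ l)\<^sup>2 \<partial>M)" for l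
  proof -
    have i1: "integrable M (\<lambda>\<omega>. (x k \<omega> $ l - c \<omega> $ l)\<^sup>2)" using xc unfolding sqi_def by auto
    have i2: "integrable M (\<lambda>\<omega>. (c \<omega> $ l - g \<omega> $ l)\<^sup>2)" using cg unfolding sqi_def by auto
    have i3: "integrable M (\<lambda>\<omega>. (x k \<omega> $ l - c \<omega> $ l) * (c \<omega> $ l - g \<omega> $ l))" by (rule sqi_prod[OF xc cg])
    have "(\<integral>\<omega>. (x k \<omega> $ l - g \<omega> $ l)\<^sup>2 \<partial>M) = (\<integral>\<omega>. (x k \<omega> $ l - c \<omega> $ l)\<^sup>2 + (c \<omega> $ l - g \<omega> $ l)\<^sup>2
         + 2 * ((x k \<omega> $ l - c \<omega> $ l) * (c \<omega> $ l - g \<omega> $ l)) \<partial>M)"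
      by (rule Bochner_Integration.integral_cong) (auto simp: power2_eq_square algebra_simps)
    also have "\<dots> = (\<integral>\<omega>. (x k \<omega> $ l - c \<omega> $ l)\<^sup>2 \<partial>M) + (\<integral>\<omega>. (c \<omega> $ l - g \<omega> $ l)\<^sup>2 \<partial>M)"
      using i1 i2 i3 cross[of l] by simp
    also have "\<dots> \<ge> (\<integral>\<omega>. (x k \<omega> $ l - c \<omega> $ l)\<^sup>2 \<partial>M)" by simp
    finally show ?thesis .
  qed
  have nn: "(\<integral>\<^sup>+\<omega>. ennreal ((norm (x k \<omega> - h \<omega>))\<^sup>2) \<partial>M) = ennreal (\<Sum>l\<in>UNIV. \<integral>\<omega>. (x k \<omega> $ l - h \<omega> $ l)\<^sup>2 \<partial>M)"
    if "\<And>l. sqi (\<lambda>\<omega>. x k \<omega> $ l - h \<omega> $ l)" for h :: "'a \<Rightarrow> real^'n"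
  proof -
    have e: "\<And>\<omega>. (norm (x k \<omega> - h \<omega>))\<^sup>2 = (\<Sum>l\<in>UNIV. (x k \<omega> $ l - h \<omega> $ l)\<^sup>2)"
      unfolding normsq_vec by simp
    have ii: "\<And>l. integrable M (\<lambda>\<omega>. (x k \<omega> $ l - h \<omega> $ l)\<^sup>2)" using that unfolding sqi_def by auto
    have "(\<integral>\<^sup>+\<omega>. ennreal ((norm (x k \<omega> - h \<omega>))\<^sup>2) \<partial>M) = (\<integral>\<^sup>+\<omega>. ennreal (\<Sum>l\<in>UNIV. (x k \<omega> $ l - h \<omega> $ l)\<^sup>2) \<partial>M)"
      unfolding e ..
    also have "\<dots> = ennreal (\<integral>\<omega>. (\<Sum>l\<in>UNIV. (x k \<omega> $ l - h \<omega> $ l)\<^sup>2) \<partial>M)"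
      by (rule nn_integral_eq_integral) (use ii in \<open>auto intro!: sum_nonneg\<close>)
    also have "(\<integral>\<omega>. (\<Sum>l\<in>UNIV. (x k \<omega> $ l - h \<omega> $ l)\<^sup>2) \<partial>M) = (\<Sum>l\<in>UNIV. \<integral>\<omega>. (x k \<omega> $ l - h \<omega> $ l)\<^sup>2 \<partial>M)"
      by (rule Bochner_Integration.integral_sum) (use ii in auto)
    finally show ?thesis .
  qed
  have "(\<integral>\<^sup>+\<omega>. ennreal ((norm (x k \<omega> - c \<omega>))\<^sup>2) \<partial>M) = ennreal (\<Sum>l\<in>UNIV. \<integral>\<omega>. (x k \<omega> $ l - c \<omega> $ l)\<^sup>2 \<partial>M)"
    using nn[of c] xc by blast
  also have "\<dots> \<le> ennreal (\<Sum>l\<in>UNIV. \<integral>\<omega>. (x k \<omega> $ l - g \<omega> $ l)\<^sup>2 \<partial>M)"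
    by (intro ennreal_leI sum_mono comp)
  also have "\<dots> = (\<integral>\<^sup>+\<omega>. ennreal ((norm (x k \<omega> - g \<omega>))\<^sup>2) \<partial>M)"
    using nn[of g] xg by simp
  finally show ?thesis unfolding c_def F_def .
qed

lemma sigma_triv: "S \<in> sigma_sets \<Omega> G \<Longrightarrow> G \<subseteq> {{}, \<Omega>} \<Longrightarrow> S = {} \<or> S = \<Omega>"
proof (induction rule: sigma_sets.induct)
  case (Union a)
  then show ?case by (cases "\<exists>i. a i = \<Omega>") auto
qed auto

lemma part2: "AE \<omega> in M. cond_exp_vec M (Ic M x tau dl u 0) (x 0) \<omega> = m0"
proof -
  define F where "F = Ic M x tau dl u 0"
  interpret F: sigma_finite_subalgebra M F unfolding F_def by (rule sfs_Ic)
  have triv: "A = {} \<or> A = space M" if "A \<in> sets F" for A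
  proof -
    have "eta_rv tau dl 0 = (\<lambda>\<omega>. \<infinity>)" unfolding eta_rv_def by simp
    moreover have "obs_c x tau dl 0 = (\<lambda>\<omega>. 0)" unfolding obs_c_def eta_rv_def by simp
    ultimately have "gc 0 \<subseteq> {{}, space M}" unfolding gc_0 preimgs_def by auto
    then show ?thesis using sigma_triv that unfolding F_def sets_Ic by blast
  qed
  have "AE \<omega> in M. real_cond_exp M F (\<lambda>\<omega>. x 0 \<omega> $ l) \<omega> = m0 $ l" for l
  proof (rule F.real_cond_exp_charact)
    fix A assume "A \<in> sets F"
    then consider "A = {}" | "A = space M" using triv by blast
    then show "(\<integral>\<omega>\<in>A. x 0 \<omega> $ l \<partial>M) = (\<integral>\<omega>\<in>A. m0 $ l \<partial>M)"
    proof cases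
      case 1 then show ?thesis by (simp add: set_lebesgue_integral_def)
    next
      case 2 then show ?thesis using x0_mean[of l] x0_int[of l] by (simp add: set_integral_space prob_space)
    qed
  qed (auto simp: x0_int)
  then have "AE \<omega> in M. \<forall>l\<in>UNIV. real_cond_exp M F (\<lambda>\<omega>. x 0 \<omega> $ l) \<omega> = m0 $ l"
    by (subst AE_finite_all) auto
  then show ?thesis unfolding F_def[symmetric]
    by (rule AE_mp[OF _ AE_I2]) (simp add: vec_eq_iff cev_nth)
qed

end

lemma (in prob_space) rce_local:
  assumes sfs: "sigma_finite_subalgebra M F" and E: "E \<in> sets F"
    and X: "integrable M X" and V: "integrable M V"
    and V': "V' \<in> borel_measurable F" "\<And>\<omega>. \<omega> \<in> E \<Longrightarrow> V \<omega> = V' \<omega>"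
    and eq: "\<And>G. G \<in> sets F \<Longrightarrow> (\<integral>\<omega>. indicator (G \<inter> E) \<omega> * X \<omega> \<partial>M) = (\<integral>\<omega>. indicator (G \<inter> E) \<omega> * V \<omega> \<partial>M)"
  shows "AE \<omega> in M. \<omega> \<in> E \<longrightarrow> real_cond_exp M F X \<omega> = V \<omega>"
proof -
  interpret F: sigma_finite_subalgebra M F by (rule sfs)
  have EM: "E \<in> sets M" using E F.subalg by (auto simp: subalgebra_def)
  have spF: "space F = space M" using F.subalg by (auto simp: subalgebra_def)
  define C where "C = real_cond_exp M F X"
  have CF[measurable]: "C \<in> borel_measurable F" unfolding C_def by simp
  have CM[measurable]: "C \<in> borel_measurable M" unfolding C_def by simp
  have Ci: "integrable M C" unfolding C_def by (rule F.real_cond_exp_int(1)[OF X])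
  define Z where "Z = (\<lambda>\<omega>. if \<omega> \<in> E then V' \<omega> else C \<omega>)"
  have ZF: "Z \<in> borel_measurable F"
    unfolding Z_def by (rule measurable_If_set[OF V'(1) CF]) (use E spF sets.sets_into_space[OF E] in \<open>simp add: Int_absorb2\<close>)
  have Zeq: "\<And>\<omega>. \<omega> \<in> space M \<Longrightarrow> Z \<omega> = V \<omega> * indicator E \<omega> + C \<omega> * indicator (space M - E) \<omega>"
    unfolding Z_def using V'(2) by (auto split: split_indicator)
  have Zi: "integrable M Z"
  proof -
    have "integrable M (\<lambda>\<omega>. V \<omega> * indicator E \<omega> + C \<omega> * indicator (space M - E) \<omega>)"
      using EM V Ci by (intro Bochner_Integration.integrable_add integrable_real_mult_indicator) auto
    then show ?thesis using Zeq by (subst Bochner_Integration.integrable_cong[OF refl]) auto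
  qed
  have "AE \<omega> in M. C \<omega> = Z \<omega>"
    unfolding C_def
  proof (rule F.real_cond_exp_charact[OF _ X Zi ZF])
    fix G assume G: "G \<in> sets F"
    have GM: "G \<in> sets M" using G F.subalg by (auto simp: subalgebra_def)
    have GE: "G - E \<in> sets F" using G E by auto
    have i1: "integrable M (\<lambda>\<omega>. indicator (G \<inter> E) \<omega> * X \<omega>)"
      using integrable_real_mult_indicator[of "G \<inter> E" M X] GM EM X by (simp add: mult.commute)
    have i2: "integrable M (\<lambda>\<omega>. indicator (G - E) \<omega> * X \<omega>)"
      using integrable_real_mult_indicator[of "G - E" M X] GM EM X by (simp add: mult.commute)
    have i3: "integrable M (\<lambda>\<omega>. indicator (G \<inter> E) \<omega> * V \<omega>)"
      using integrable_real_mult_indicator[of "G \<inter> E" M V] GM EM V by (simp add: mult.commute)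
    have i4: "integrable M (\<lambda>\<omega>. indicator (G - E) \<omega> * C \<omega>)"
      using integrable_real_mult_indicator[of "G - E" M C] GM EM Ci by (simp add: mult.commute)
    have c: "(\<integral>\<omega>. indicator (G - E) \<omega> * C \<omega> \<partial>M) = (\<integral>\<omega>. indicator (G - E) \<omega> * X \<omega> \<partial>M)"
      unfolding C_def by (rule F.real_cond_exp_intg(2)) (use i2 GE X in auto)
    have "(\<integral>\<omega>\<in>G. X \<omega> \<partial>M) = (\<integral>\<omega>. indicator (G \<inter> E) \<omega> * X \<omega> + indicator (G - E) \<omega> * X \<omega> \<partial>M)"
      unfolding set_lebesgue_integral_def
      by (rule Bochner_Integration.integral_cong) (auto split: split_indicator)
    also have "\<dots> = (\<integral>\<omega>. indicator (G \<inter> E) \<omega> * X \<omega> \<partial>M) + (\<integral>\<omega>. indicator (G - E) \<omega> * X \<omega> \<partial>M)"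
      using i1 i2 by simp
    also have "\<dots> = (\<integral>\<omega>. indicator (G \<inter> E) \<omega> * V \<omega> \<partial>M) + (\<integral>\<omega>. indicator (G - E) \<omega> * C \<omega> \<partial>M)"
      using eq[OF G] c by simp
    also have "\<dots> = (\<integral>\<omega>. indicator (G \<inter> E) \<omega> * V \<omega> + indicator (G - E) \<omega> * C \<omega> \<partial>M)"
      using i3 i4 by simp
    also have "\<dots> = (\<integral>\<omega>\<in>G. Z \<omega> \<partial>M)"
      unfolding set_lebesgue_integral_def
      by (rule Bochner_Integration.integral_cong) (auto simp: Zeq split: split_indicator)
    finally show "(\<integral>\<omega>\<in>G. X \<omega> \<partial>M) = (\<integral>\<omega>\<in>G. Z \<omega> \<partial>M)" .
  qed
  then show ?thesis
    by (rule AE_mp[OF _ AE_I2]) (auto simp: Z_def C_def V'(2))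
qed

lemma mv_nth: "((C::real^'k^'l) *v v) $ i = (\<Sum>l\<in>UNIV. C $ i $ l * v $ l)"
  by (simp add: matrix_vector_mult_def)

context setting begin

lemma int_ind: fixes f :: "'a \<Rightarrow> real" shows "G \<in> sets M \<Longrightarrow> integrable M f \<Longrightarrow> integrable M (\<lambda>\<omega>. indicator G \<omega> * f \<omega>)"
  using integrable_real_mult_indicator[of G M f] by (simp add: mult.commute)

lemma x_int: "integrable M (\<lambda>\<omega>. x k \<omega> $ l)"
  using vsq_x[of k] sqi_int unfolding vsq_def by blast

lemma Bu_int: "integrable M (\<lambda>\<omega>. (B *v u k \<omega>) $ l)"
  using vsq_mv[OF vsq_u[of k], of B] sqi_int unfolding vsq_def by blast

lemma obs_not_dl: "\<not> dl k \<omega> \<Longrightarrow> obs_c x tau dl (Suc k) \<omega> = obs_c x tau dl k \<omega>"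
  unfolding obs_c_def eta_rv_Suc by (cases "eta_rv tau dl k \<omega>") (auto simp: one_enat_def)

lemma trace_notdl:
  assumes G: "G \<in> sets (Ic M x tau dl u (Suc k))"
  shows "G \<inter> {\<omega> \<in> space M. \<not> dl k \<omega>} \<in> sets (Ic_dl M x tau dl u k)"
proof -
  define H where "H = Ic_dl M x tau dl u k"
  define E where "E = {\<omega> \<in> space M. \<not> dl k \<omega>}"
  have spH: "space H = space M" unfolding H_def by simp
  have dlH[measurable]: "dl k \<in> measurable H (count_space UNIV)" unfolding H_def by (rule dl_Icdl)
  have EH: "E \<in> sets H" unfolding E_def using spH[symmetric] by simp
  have Esub: "E \<subseteq> space M" unfolding E_def by auto
  have gen: "S \<inter> E \<in> sets H" if S: "S \<in> gc (Suc k)" for S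
  proof -
    note ag = agr_sets[OF _ EH spH Esub]
    note mH = ag[OF agr_meas]
    have a1: "\<forall>S\<in>gc k. S \<in> sets H" unfolding H_def sets_Icdl by auto
    have a1': "\<forall>S\<in>gc k. S \<inter> E \<in> sets H" using a1 EH by auto
    have a2: "\<forall>S\<in>preimgs M (dl k) (count_space UNIV). S \<inter> E \<in> sets H" using mH[OF dlH] .
    have a3: "\<forall>S\<in>preimgs M (u k) borel. S \<inter> E \<in> sets H" using mH[OF u_Icdl[of k, folded H_def]] .
    have "agr H E (eta_rv tau dl (Suc k)) (count_space UNIV)"
    proof (rule agrI)
      have "eta_rv tau dl k \<in> measurable H (count_space UNIV)" unfolding H_def by (rule eta_Icdl)
      then show "(\<lambda>\<omega>. eta_rv tau dl k \<omega> + 1) \<in> measurable H (count_space UNIV)" by measurable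
      show "\<forall>\<omega>\<in>E. eta_rv tau dl (Suc k) \<omega> = eta_rv tau dl k \<omega> + 1" unfolding E_def by (simp add: eta_rv_Suc)
    qed
    then have a4: "\<forall>S\<in>preimgs M (eta_rv tau dl (Suc k)) (count_space UNIV). S \<inter> E \<in> sets H" by (rule ag)
    have "agr H E (obs_c x tau dl (Suc k)) borel"
    proof (rule agrI)
      show "obs_c x tau dl k \<in> borel_measurable H" unfolding H_def by (rule obs_Icdl)
      show "\<forall>\<omega>\<in>E. obs_c x tau dl (Suc k) \<omega> = obs_c x tau dl k \<omega>" unfolding E_def by (simp add: obs_not_dl)
    qed
    then have a5: "\<forall>S\<in>preimgs M (obs_c x tau dl (Suc k)) borel. S \<inter> E \<in> sets H" by (rule ag)
    show ?thesis using S a1' a2 a3 a4 a5 unfolding gc_Suc by blast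
  qed
  have "G \<in> sigma_sets (space M) (gc (Suc k))" using G unfolding sets_Ic .
  then have "G \<inter> E \<in> sets H" by (rule sigma_sets_trace) (use gen EH spH in auto)
  then show ?thesis unfolding H_def E_def .
qed

lemma int_sum_lin:
  fixes f :: "'l::finite \<Rightarrow> 'a \<Rightarrow> real"
  assumes "G \<in> sets M" "\<And>l. integrable M (f l)"
  shows "(\<integral>\<omega>. indicator G \<omega> * (\<Sum>l\<in>UNIV. c l * f l \<omega>) \<partial>M) = (\<Sum>l\<in>UNIV. c l * (\<integral>\<omega>. indicator G \<omega> * f l \<omega> \<partial>M))"
proof -
  have "(\<integral>\<omega>. indicator G \<omega> * (\<Sum>l\<in>UNIV. c l * f l \<omega>) \<partial>M) = (\<integral>\<omega>. (\<Sum>l\<in>UNIV. c l * (indicator G \<omega> * f l \<omega>)) \<partial>M)"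
    by (simp add: sum_distrib_left algebra_simps)
  also have "\<dots> = (\<Sum>l\<in>UNIV. (\<integral>\<omega>. c l * (indicator G \<omega> * f l \<omega>) \<partial>M))"
    by (rule Bochner_Integration.integral_sum) (use int_ind assms in auto)
  also have "\<dots> = (\<Sum>l\<in>UNIV. c l * (\<integral>\<omega>. indicator G \<omega> * f l \<omega> \<partial>M))"
    by simp
  finally show ?thesis .
qed

lemma part3b: "AE \<omega> in M. \<not> dl k \<omega> \<longrightarrow>
           cond_exp_vec M (Ic M x tau dl u (Suc k)) (x (Suc k)) \<omega> =
             A *v cond_exp_vec M (Ic M x tau dl u k) (x k) \<omega> + B *v u k \<omega>
             + A *v (cond_exp_vec M (Ic_dl M x tau dl u k) (x k) \<omega>
                     - cond_exp_vec M (Ic M x tau dl u k) (x k) \<omega>)"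
proof -
  define F where "F = Ic M x tau dl u (Suc k)"
  define H where "H = Ic_dl M x tau dl u k"
  define E where "E = {\<omega> \<in> space M. \<not> dl k \<omega>}"
  interpret H: sigma_finite_subalgebra M H unfolding H_def by (rule sfs_Icdl)
  have sfsF: "sigma_finite_subalgebra M F" unfolding F_def by (rule sfs_Ic)
  have dlF[measurable]: "dl k \<in> measurable F (count_space UNIV)" unfolding F_def by (rule dl_IcS)
  have EF: "E \<in> sets F" unfolding E_def
  proof -
    have "{\<omega> \<in> space F. \<not> dl k \<omega>} \<in> sets F" by measurable
    then show "{\<omega> \<in> space M. \<not> dl k \<omega>} \<in> sets F" unfolding F_def by simp
  qed
  have HF: "sets H \<subseteq> sets F" unfolding H_def F_def by (rule Icdl_sub_IcS)
  have HM: "sets H \<subseteq> sets M" unfolding H_def by (rule Icdl_sub_M)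
  have HFF: "sets H \<subseteq> sets (FF k)" unfolding H_def by (rule Icdl_sub_FF)
  have uH[measurable]: "u k \<in> borel_measurable H" unfolding H_def by (rule u_Icdl)
  have comp: "AE \<omega> in M. \<omega> \<in> E \<longrightarrow> real_cond_exp M F (\<lambda>\<omega>. x (Suc k) \<omega> $ i) \<omega>
      = (\<Sum>l\<in>UNIV. A $ i $ l * real_cond_exp M H (\<lambda>\<eta>. x k \<eta> $ l) \<omega>) + (B *v u k \<omega>) $ i" for i
  proof (rule rce_local[OF sfsF EF])
    show "integrable M (\<lambda>\<omega>. x (Suc k) \<omega> $ i)" by (rule x_int)
    have "integrable M (\<lambda>\<omega>. real_cond_exp M H (\<lambda>\<eta>. x k \<eta> $ l) \<omega>)" for l
      by (rule H.real_cond_exp_int(1)[OF x_int])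
    then show "integrable M (\<lambda>\<omega>. (\<Sum>l\<in>UNIV. A $ i $ l * real_cond_exp M H (\<lambda>\<eta>. x k \<eta> $ l) \<omega>) + (B *v u k \<omega>) $ i)"
      using Bu_int by auto
    have "(\<lambda>\<omega>. (\<Sum>l\<in>UNIV. A $ i $ l * real_cond_exp M H (\<lambda>\<eta>. x k \<eta> $ l) \<omega>) + (B *v u k \<omega>) $ i) \<in> borel_measurable H"
      by measurable
    then show "(\<lambda>\<omega>. (\<Sum>l\<in>UNIV. A $ i $ l * real_cond_exp M H (\<lambda>\<eta>. x k \<eta> $ l) \<omega>) + (B *v u k \<omega>) $ i) \<in> borel_measurable F"
      by (rule meas_sub[OF _ HF]) (simp add: H_def F_def)
  next
    fix G assume G: "G \<in> sets F"
    have GH: "G \<inter> E \<in> sets H" using trace_notdl[of G k] G unfolding F_def H_def E_def by simp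
    have GM: "G \<inter> E \<in> sets M" using GH HM by blast
    have GFF: "G \<inter> E \<in> sets (FF k)" using GH HFF by blast
    have "(\<integral>\<omega>. indicator (G \<inter> E) \<omega> * x (Suc k) \<omega> $ i \<partial>M)
        = (\<integral>\<omega>. indicator (G \<inter> E) \<omega> * (\<Sum>l\<in>UNIV. A $ i $ l * x k \<omega> $ l)
             + indicator (G \<inter> E) \<omega> * (B *v u k \<omega>) $ i + indicator (G \<inter> E) \<omega> * w k \<omega> $ i \<partial>M)"
      by (rule Bochner_Integration.integral_cong) (simp_all add: dyn mv_nth algebra_simps)
    also have "\<dots> = (\<integral>\<omega>. indicator (G \<inter> E) \<omega> * (\<Sum>l\<in>UNIV. A $ i $ l * x k \<omega> $ l) \<partial>M)
        + (\<integral>\<omega>. indicator (G \<inter> E) \<omega> * (B *v u k \<omega>) $ i \<partial>M) + (\<integral>\<omega>. indicator (G \<inter> E) \<omega> * w k \<omega> $ i \<partial>M)"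
    proof -
      have "integrable M (\<lambda>\<omega>. (\<Sum>l\<in>UNIV. A $ i $ l * x k \<omega> $ l))" using x_int by auto
      then show ?thesis using int_ind[OF GM] Bu_int w_int by simp
    qed
    also have "(\<integral>\<omega>. indicator (G \<inter> E) \<omega> * w k \<omega> $ i \<partial>M) = 0" by (rule indep_zero'[OF GFF])
    also have "(\<integral>\<omega>. indicator (G \<inter> E) \<omega> * (\<Sum>l\<in>UNIV. A $ i $ l * x k \<omega> $ l) \<partial>M)
        = (\<Sum>l\<in>UNIV. A $ i $ l * (\<integral>\<omega>. indicator (G \<inter> E) \<omega> * x k \<omega> $ l \<partial>M))"
      by (rule int_sum_lin[OF GM x_int])
    also have "\<dots> = (\<Sum>l\<in>UNIV. A $ i $ l * (\<integral>\<omega>. indicator (G \<inter> E) \<omega> * real_cond_exp M H (\<lambda>\<eta>. x k \<eta> $ l) \<omega> \<partial>M))"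
    proof (rule sum.cong[OF refl])
      fix l
      have "(\<integral>\<omega>. indicator (G \<inter> E) \<omega> * real_cond_exp M H (\<lambda>\<eta>. x k \<eta> $ l) \<omega> \<partial>M)
          = (\<integral>\<omega>. indicator (G \<inter> E) \<omega> * x k \<omega> $ l \<partial>M)"
        by (rule H.real_cond_exp_intg(2)) (use int_ind[OF GM x_int] GH in auto)
      then show "A $ i $ l * (\<integral>\<omega>. indicator (G \<inter> E) \<omega> * x k \<omega> $ l \<partial>M) =
          A $ i $ l * (\<integral>\<omega>. indicator (G \<inter> E) \<omega> * real_cond_exp M H (\<lambda>\<eta>. x k \<eta> $ l) \<omega> \<partial>M)" by simp
    qed
    also have "\<dots> = (\<integral>\<omega>. indicator (G \<inter> E) \<omega> * (\<Sum>l\<in>UNIV. A $ i $ l * real_cond_exp M H (\<lambda>\<eta>. x k \<eta> $ l) \<omega>) \<partial>M)"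
      by (rule int_sum_lin[OF GM H.real_cond_exp_int(1)[OF x_int], symmetric])
    finally show "(\<integral>\<omega>. indicator (G \<inter> E) \<omega> * x (Suc k) \<omega> $ i \<partial>M) =
         (\<integral>\<omega>. indicator (G \<inter> E) \<omega> * ((\<Sum>l\<in>UNIV. A $ i $ l * real_cond_exp M H (\<lambda>\<eta>. x k \<eta> $ l) \<omega>) + (B *v u k \<omega>) $ i) \<partial>M)"
    proof -
      have ii: "integrable M (\<lambda>\<omega>. indicator (G \<inter> E) \<omega> * (\<Sum>l\<in>UNIV. A $ i $ l * real_cond_exp M H (\<lambda>\<eta>. x k \<eta> $ l) \<omega>))"
        by (rule int_ind[OF GM]) (use H.real_cond_exp_int(1)[OF x_int] in auto)
      assume "(\<integral>\<omega>. indicator (G \<inter> E) \<omega> * x (Suc k) \<omega> $ i \<partial>M) =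
          (\<integral>\<omega>. indicator (G \<inter> E) \<omega> * (\<Sum>l\<in>UNIV. A $ i $ l * real_cond_exp M H (\<lambda>\<eta>. x k \<eta> $ l) \<omega>) \<partial>M)
          + (\<integral>\<omega>. indicator (G \<inter> E) \<omega> * (B *v u k \<omega>) $ i \<partial>M) + 0"
      then show ?thesis using ii int_ind[OF GM Bu_int] by (simp add: distrib_left)
    qed
  qed simp
  have "AE \<omega> in M. \<forall>i\<in>UNIV. \<omega> \<in> E \<longrightarrow> real_cond_exp M F (\<lambda>\<omega>. x (Suc k) \<omega> $ i) \<omega>
      = (\<Sum>l\<in>UNIV. A $ i $ l * real_cond_exp M H (\<lambda>\<eta>. x k \<eta> $ l) \<omega>) + (B *v u k \<omega>) $ i"
    using comp by (subst AE_finite_all) auto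
  then show ?thesis
  proof (rule AE_mp[OF _ AE_I2], intro impI)
    fix \<omega> assume om: "\<omega> \<in> space M" and nd: "\<not> dl k \<omega>"
      and h: "\<forall>i\<in>UNIV. \<omega> \<in> E \<longrightarrow> real_cond_exp M F (\<lambda>\<omega>. x (Suc k) \<omega> $ i) \<omega>
      = (\<Sum>l\<in>UNIV. A $ i $ l * real_cond_exp M H (\<lambda>\<eta>. x k \<eta> $ l) \<omega>) + (B *v u k \<omega>) $ i"
    have "\<omega> \<in> E" using om nd unfolding E_def by simp
    then show "cond_exp_vec M (Ic M x tau dl u (Suc k)) (x (Suc k)) \<omega> =
             A *v cond_exp_vec M (Ic M x tau dl u k) (x k) \<omega> + B *v u k \<omega>
             + A *v (cond_exp_vec M (Ic_dl M x tau dl u k) (x k) \<omega>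
                     - cond_exp_vec M (Ic M x tau dl u k) (x k) \<omega>)"
      using h unfolding F_def[symmetric] H_def[symmetric]
      by (simp add: vec_eq_iff cev_nth mv_nth matrix_vector_mult_diff_distrib algebra_simps)
  qed
qed

end

context setting begin

lemma u_IcS_le: "s \<le> k \<Longrightarrow> u s \<in> borel_measurable (Ic M x tau dl u (Suc k))"
  unfolding Ic_def by (rule meas_sigma_gen[OF _ gc_Pow]) (auto simp: gens_c_def)

lemma zeta_rv_le: "zeta_rv tau k \<omega> \<le> k"
  unfolding zeta_rv_def by (rule zeta_le)

definition Ysol :: "nat \<Rightarrow> 'a \<Rightarrow> real^'n" where
  "Ysol k \<omega> = mpow A (zeta_rv tau k \<omega> + 1) *v x (k - zeta_rv tau k \<omega>) \<omega>
             + (\<Sum>t\<in>{0..zeta_rv tau k \<omega>}. (mpow A t ** B) *v u (k - t) \<omega>)"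

definition Nse :: "nat \<Rightarrow> 'a \<Rightarrow> real^'n" where
  "Nse k \<omega> = (\<Sum>t\<in>{0..zeta_rv tau k \<omega>}. mpow A t *v w (k - t) \<omega>)"

lemma path_decomp: "\<omega> \<in> space M \<Longrightarrow> x (Suc k) \<omega> = Ysol k \<omega> + Nse k \<omega>"
  using unroll[of "\<lambda>j. x j \<omega>" A B "\<lambda>j. u j \<omega>" "\<lambda>j. w j \<omega>" "zeta_rv tau k \<omega>" k] dyn zeta_rv_le[of k \<omega>]
  unfolding Ysol_def Nse_def by (simp add: add.assoc)

lemma Ev_ind: "\<omega> \<in> space M \<Longrightarrow> t \<le> k \<Longrightarrow> indicator (Ev k (k - t)) \<omega> = (if t \<le> zeta_rv tau k \<omega> then 1 else (0::real))"
  using zeta_rv_le[of k \<omega>] unfolding Ev_def by (auto split: split_indicator)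

lemma Nse_nth: "\<omega> \<in> space M \<Longrightarrow> Nse k \<omega> $ i =
   (\<Sum>t\<in>{0..k}. \<Sum>l\<in>UNIV. (mpow A t $ i $ l) * (indicator (Ev k (k - t)) \<omega> * w (k - t) \<omega> $ l))"
proof -
  assume om: "\<omega> \<in> space M"
  have "Nse k \<omega> $ i = (\<Sum>t\<in>{0..zeta_rv tau k \<omega>}. (mpow A t *v w (k - t) \<omega>) $ i)"
    unfolding Nse_def by (simp add: sum_component)
  also have "\<dots> = (\<Sum>t\<in>{0..k} \<inter> {0..zeta_rv tau k \<omega>}. (mpow A t *v w (k - t) \<omega>) $ i)"
    using zeta_rv_le[of k \<omega>] by (intro sum.cong) auto
  also have "\<dots> = (\<Sum>t\<in>{0..k}. if t \<in> {0..zeta_rv tau k \<omega>} then (mpow A t *v w (k - t) \<omega>) $ i else 0)"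
    by (rule sum.inter_restrict) simp
  also have "\<dots> = (\<Sum>t\<in>{0..k}. \<Sum>l\<in>UNIV. (mpow A t $ i $ l) * (indicator (Ev k (k - t)) \<omega> * w (k - t) \<omega> $ l))"
    by (intro sum.cong refl) (auto simp: Ev_ind[OF om] mv_nth)
  finally show ?thesis .
qed

lemma Nse_int: "integrable M (\<lambda>\<omega>. Nse k \<omega> $ i)"
proof -
  have EvM: "Ev k (k - t) \<in> sets M" for t using Ev_FF FF_sub by blast
  have "integrable M (\<lambda>\<omega>. \<Sum>t\<in>{0..k}. \<Sum>l\<in>UNIV. (mpow A t $ i $ l) * (indicator (Ev k (k - t)) \<omega> * w (k - t) \<omega> $ l))"
    using int_ind[OF EvM w_int] by auto
  then show ?thesis by (rule Bochner_Integration.integrable_cong[OF refl, THEN iffD1, rotated]) (simp add: Nse_nth)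
qed

lemma Nse_zero:
  assumes G: "G \<in> sets (Ic M x tau dl u (Suc k))"
  shows "(\<integral>\<omega>. indicator G \<omega> * Nse k \<omega> $ i \<partial>M) = 0"
proof -
  have Gs: "G \<in> sigma_sets (space M) (gc (Suc k))" using G unfolding sets_Ic .
  have GE: "G \<inter> Ev k (k - t) \<in> sets (FF (k - t))" for t by (rule trace_IcS[OF Gs])
  have GEM: "G \<inter> Ev k (k - t) \<in> sets M" for t using GE FF_sub by blast
  have "(\<integral>\<omega>. indicator G \<omega> * Nse k \<omega> $ i \<partial>M) =
    (\<integral>\<omega>. (\<Sum>t\<in>{0..k}. \<Sum>l\<in>UNIV. (mpow A t $ i $ l) * (indicator (G \<inter> Ev k (k - t)) \<omega> * w (k - t) \<omega> $ l)) \<partial>M)"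
    by (rule Bochner_Integration.integral_cong[OF refl])
       (simp add: Nse_nth sum_distrib_left algebra_simps indicator_inter_arith)
  also have "\<dots> = (\<Sum>t\<in>{0..k}. \<Sum>l\<in>UNIV. (mpow A t $ i $ l) * (\<integral>\<omega>. indicator (G \<inter> Ev k (k - t)) \<omega> * w (k - t) \<omega> $ l \<partial>M))"
    using int_ind[OF GEM w_int] by (simp add: Bochner_Integration.integral_sum)
  also have "\<dots> = 0" using indep_zero'[OF GE] by simp
  finally show ?thesis .
qed

definition Ymeas :: "nat \<Rightarrow> 'a \<Rightarrow> real^'n" where
  "Ymeas k \<omega> = (case eta_rv tau dl (Suc k) \<omega> of enat e \<Rightarrow> mpow A e *v obs_c x tau dl (Suc k) \<omega>
       + (\<Sum>t\<in>{0..e - 1}. (mpow A t ** B) *v u (k - t) \<omega>) | \<infinity> \<Rightarrow> 0)"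

lemma Ymeas_meas: "Ymeas k \<in> borel_measurable (Ic M x tau dl u (Suc k))"
proof -
  define g where "g = (\<lambda>ee \<omega>. case ee of enat e \<Rightarrow> mpow A e *v obs_c x tau dl (Suc k) \<omega>
       + (\<Sum>t\<in>{0..e - 1}. (mpow A t ** B) *v u (k - t) \<omega>) | \<infinity> \<Rightarrow> (0::real^'n))"
  have "(\<lambda>\<omega>. g (eta_rv tau dl (Suc k) \<omega>) \<omega>) \<in> borel_measurable (Ic M x tau dl u (Suc k))"
  proof (rule measurable_compose_countable[OF _ eta_IcS])
    fix ee :: enat
    show "g ee \<in> borel_measurable (Ic M x tau dl u (Suc k))"
    proof (cases ee)
      case (enat e)
      note [measurable] = obs_IcS[of k] u_IcS_le[of _ k]
      have "(\<lambda>\<omega>. mpow A e *v obs_c x tau dl (Suc k) \<omega>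
       + (\<Sum>t\<in>{0..e - 1}. (mpow A t ** B) *v u (k - t) \<omega>)) \<in> borel_measurable (Ic M x tau dl u (Suc k))"
        by measurable
      then show ?thesis unfolding g_def enat by simp
    next
      case infinity then show ?thesis unfolding g_def by simp
    qed
  qed
  then show ?thesis unfolding g_def Ymeas_def[abs_def] by simp
qed

lemma Ymeas_eq: "dl k \<omega> \<Longrightarrow> Ymeas k \<omega> = Ysol k \<omega>"
  unfolding Ymeas_def Ysol_def by (simp add: eta_rv_Suc obs_c_def)

lemma part3a: "AE \<omega> in M. dl k \<omega> \<longrightarrow>
           cond_exp_vec M (Ic M x tau dl u (Suc k)) (x (Suc k)) \<omega> =
             mpow A (zeta_rv tau k \<omega> + 1) *v x (k - zeta_rv tau k \<omega>) \<omega>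
             + (\<Sum>t\<in>{0..zeta_rv tau k \<omega>}. (mpow A t ** B) *v u (k - t) \<omega>)"
proof -
  define F where "F = Ic M x tau dl u (Suc k)"
  define E where "E = {\<omega> \<in> space M. dl k \<omega>}"
  have sfsF: "sigma_finite_subalgebra M F" unfolding F_def by (rule sfs_Ic)
  have dlF[measurable]: "dl k \<in> measurable F (count_space UNIV)" unfolding F_def by (rule dl_IcS)
  have EF: "E \<in> sets F" unfolding E_def
  proof -
    have "{\<omega> \<in> space F. dl k \<omega>} \<in> sets F" by measurable
    then show "{\<omega> \<in> space M. dl k \<omega>} \<in> sets F" unfolding F_def by simp
  qed
  have comp: "AE \<omega> in M. \<omega> \<in> E \<longrightarrow> real_cond_exp M F (\<lambda>\<omega>. x (Suc k) \<omega> $ i) \<omega>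
      = x (Suc k) \<omega> $ i - Nse k \<omega> $ i" for i
  proof (rule rce_local[OF sfsF EF])
    show "integrable M (\<lambda>\<omega>. x (Suc k) \<omega> $ i)" by (rule x_int)
    show "integrable M (\<lambda>\<omega>. x (Suc k) \<omega> $ i - Nse k \<omega> $ i)" using x_int Nse_int by auto
    show "(\<lambda>\<omega>. Ymeas k \<omega> $ i) \<in> borel_measurable F" unfolding F_def using Ymeas_meas by measurable
    show "x (Suc k) \<omega> $ i - Nse k \<omega> $ i = Ymeas k \<omega> $ i" if "\<omega> \<in> E" for \<omega>
      using that unfolding E_def by (simp add: Ymeas_eq path_decomp)
  next
    fix G assume G: "G \<in> sets F"
    have GE: "G \<inter> E \<in> sets F" using G EF by auto
    have GM: "G \<inter> E \<in> sets M" using GE unfolding F_def using Ic_sub_M by blast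
    have z: "(\<integral>\<omega>. indicator (G \<inter> E) \<omega> * Nse k \<omega> $ i \<partial>M) = 0"
      by (rule Nse_zero) (use GE in \<open>simp add: F_def\<close>)
    have "(\<integral>\<omega>. indicator (G \<inter> E) \<omega> * (x (Suc k) \<omega> $ i - Nse k \<omega> $ i) \<partial>M)
       = (\<integral>\<omega>. indicator (G \<inter> E) \<omega> * x (Suc k) \<omega> $ i - indicator (G \<inter> E) \<omega> * Nse k \<omega> $ i \<partial>M)"
      by (simp add: algebra_simps)
    also have "\<dots> = (\<integral>\<omega>. indicator (G \<inter> E) \<omega> * x (Suc k) \<omega> $ i \<partial>M)"
      using int_ind[OF GM x_int] int_ind[OF GM Nse_int] z by simp
    finally show "(\<integral>\<omega>. indicator (G \<inter> E) \<omega> * x (Suc k) \<omega> $ i \<partial>M) =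
         (\<integral>\<omega>. indicator (G \<inter> E) \<omega> * (x (Suc k) \<omega> $ i - Nse k \<omega> $ i) \<partial>M)" by simp
  qed
  have "AE \<omega> in M. \<forall>i\<in>UNIV. \<omega> \<in> E \<longrightarrow> real_cond_exp M F (\<lambda>\<omega>. x (Suc k) \<omega> $ i) \<omega>
      = x (Suc k) \<omega> $ i - Nse k \<omega> $ i"
    using comp by (subst AE_finite_all) auto
  then show ?thesis
  proof (rule AE_mp[OF _ AE_I2], intro impI)
    fix \<omega> assume om: "\<omega> \<in> space M" and d: "dl k \<omega>"
      and h: "\<forall>i\<in>UNIV. \<omega> \<in> E \<longrightarrow> real_cond_exp M F (\<lambda>\<omega>. x (Suc k) \<omega> $ i) \<omega>
      = x (Suc k) \<omega> $ i - Nse k \<omega> $ i"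
    have "\<omega> \<in> E" using om d unfolding E_def by simp
    then have "cond_exp_vec M F (x (Suc k)) \<omega> = x (Suc k) \<omega> - Nse k \<omega>"
      using h by (simp add: vec_eq_iff cev_nth)
    also have "\<dots> = Ysol k \<omega>" using path_decomp[OF om] by simp
    finally show "cond_exp_vec M (Ic M x tau dl u (Suc k)) (x (Suc k)) \<omega> =
             mpow A (zeta_rv tau k \<omega> + 1) *v x (k - zeta_rv tau k \<omega>) \<omega>
             + (\<Sum>t\<in>{0..zeta_rv tau k \<omega>}. (mpow A t ** B) *v u (k - t) \<omega>)"
      unfolding F_def Ysol_def .
  qed
qed

end

theorem lemma2:
  fixes M :: "'a measure"
    and A :: "real^'n^'n" and B :: "real^'m^'n"
    and W M0 :: "real^'n^'n" and m0 :: "real^'n"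
    and N :: nat
    and x w :: "nat \<Rightarrow> 'a \<Rightarrow> real^'n"
    and u :: "nat \<Rightarrow> 'a \<Rightarrow> real^'m"
    and tau :: "nat \<Rightarrow> 'a \<Rightarrow> nat"
    and dl :: "nat \<Rightarrow> 'a \<Rightarrow> bool"
    and xi :: "nat \<Rightarrow> 'a \<Rightarrow> real"
  assumes P: "prob_space M"
    and x0_gauss: "gaussian_vec M (x 0) m0 M0"
    and W_pd: "pd_mat W"
    and w_gauss: "\<And>k. gaussian_vec M (w k) 0 W"
    and tau_meas: "\<And>k. tau k \<in> measurable M (count_space UNIV)"
    and tau0: "\<And>\<omega>. \<omega> \<in> space M \<Longrightarrow> tau 0 \<omega> = 0"
    and xi_meas: "\<And>k. xi k \<in> borel_measurable M"
    and indep: "prob_space.indep_sets M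
        (\<lambda>i. case i of PX0 \<Rightarrow> preimgs M (x 0) borel
                     | PW k \<Rightarrow> preimgs M (w k) borel
                     | PTau k \<Rightarrow> preimgs M (tau k) (count_space UNIV)
                     | PXi k \<Rightarrow> preimgs M (xi k) borel) UNIV"
    and dyn: "\<And>k \<omega>. \<omega> \<in> space M \<Longrightarrow> x (Suc k) \<omega> = A *v x k \<omega> + B *v u k \<omega> + w k \<omega>"
    and ctrl: "\<And>k. u k \<in> borel_measurable (Ic M x tau dl u k)"
    and ctrl_L2: "\<And>k i. integrable M (\<lambda>\<omega>. (u k \<omega> $ i)\<^sup>2)"
    and trig: "\<And>k. dl k \<in> measurable
        (sigma (space M) (gens_e M x tau dl u k \<union> preimgs M (xi k) borel)) (count_space UNIV)"
  shows
    "(\<forall>k\<le>N.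
        cond_exp_vec M (Ic M x tau dl u k) (x k) \<in> borel_measurable (Ic M x tau dl u k) \<and>
        (\<forall>g \<in> borel_measurable (Ic M x tau dl u k).
           (\<integral>\<^sup>+\<omega>. ennreal ((norm (x k \<omega> - cond_exp_vec M (Ic M x tau dl u k) (x k) \<omega>))\<^sup>2) \<partial>M)
             \<le> (\<integral>\<^sup>+\<omega>. ennreal ((norm (x k \<omega> - g \<omega>))\<^sup>2) \<partial>M)))
   \<and> (AE \<omega> in M. cond_exp_vec M (Ic M x tau dl u 0) (x 0) \<omega> = m0)
   \<and> (\<forall>k\<le>N. AE \<omega> in M.
        (dl k \<omega> \<longrightarrow>
           cond_exp_vec M (Ic M x tau dl u (Suc k)) (x (Suc k)) \<omega> =
             mpow A (zeta_rv tau k \<omega> + 1) *v x (k - zeta_rv tau k \<omega>) \<omega>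
             + (\<Sum>t\<in>{0..zeta_rv tau k \<omega>}. (mpow A t ** B) *v u (k - t) \<omega>)) \<and>
        (\<not> dl k \<omega> \<longrightarrow>
           cond_exp_vec M (Ic M x tau dl u (Suc k)) (x (Suc k)) \<omega> =
             A *v cond_exp_vec M (Ic M x tau dl u k) (x k) \<omega> + B *v u k \<omega>
             + A *v (cond_exp_vec M (Ic_dl M x tau dl u k) (x k) \<omega>
                     - cond_exp_vec M (Ic M x tau dl u k) (x k) \<omega>)))"
proof -
  interpret setting M A B W M0 m0 x w u tau dl xi
    by (rule setting.intro) (fact assms)+
  show ?thesis
    using part1 part2 part3a part3b cev_meas by (auto intro: AE_conjI)
qed

end
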